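(* For any $k\in\mathbb{Z}$ with $|k|\geq1$, any $\lambda\in\mathbb{R}$ and any $w\in D_k$, with $F$ defined as in the context, $$|k|^{1/2}\|w\|_{H^1}+|k|\|w\|_{L^2}\lesssim\|F\|_{L^2},\qquad \|w\|_{H^1}+|k|^{1/2}\|w\|_{L^2}\lesssim\|F\|_{H^{-1}},$$ with implicit constants independent of $k,\beta_k,\lambda,w$.
   Context: Functions are complex-valued on $r\in(0,\infty)$; $\langle f,g\rangle=\int_0^\infty f\bar g\,dr$; $\|\cdot\|_{L^2}$, $\|\cdot\|_{H^1}$ are the $L^2(0,\infty)$, $H^1(0,\infty)$ norms, and $\|\cdot\|_{H^{-1}}$ is the norm dual to $H^1_0(0,\infty)$ with respect to $\langle\cdot,\cdot\rangle$. $\beta_k\in\mathbb{R}$. $D_k$ is the set of $w\in H^2_{loc}(0,\infty)\cap L^2(0,\infty)$ with $-w''+\big(\frac{k^2-1/4}{r^2}+\frac{r^2}{16}-\frac12\big)w+i\beta_k\frac{w}{r^2}\in L^2(0,\infty)$ (for $|k|\ge1$ equivalently $w'',w/r^2,r^2w\in L^2$); such $w$ satisfy $w(0)=w(\infty)=0$. $F=-\big[w''-\big(\frac{k^2-1/4}{r^2}+\frac{r^2}{16}-\frac12\big)w\big]+i\beta_k\big(\frac1{r^2}-\lambda\big)w$. *)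

theory Defs
  imports "HOL-Analysis.Analysis"
begin

definition L2_on :: "real set \<Rightarrow> (real \<Rightarrow> complex) \<Rightarrow> bool" where
  "L2_on S f \<longleftrightarrow> f measurable_on S \<and> (\<lambda>r. (cmod (f r))\<^sup>2) integrable_on S"

definition L2norm :: "(real \<Rightarrow> complex) \<Rightarrow> real" where
  "L2norm f = sqrt (integral {0<..} (\<lambda>r. (cmod (f r))\<^sup>2))"

definition H1norm :: "(real \<Rightarrow> complex) \<Rightarrow> (real \<Rightarrow> complex) \<Rightarrow> real" where
  "H1norm f f' = sqrt ((L2norm f)\<^sup>2 + (L2norm f')\<^sup>2)"

definition H10 :: "(real \<Rightarrow> complex) \<Rightarrow> (real \<Rightarrow> complex) \<Rightarrow> bool" where
  "H10 \<phi> \<phi>' \<longleftrightarrow> L2_on {0<..} \<phi> \<and> L2_on {0<..} \<phi>' \<and> \<phi> 0 = 0 \<and>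
     (\<forall>a b. 0 \<le> a \<and> a \<le> b \<longrightarrow> \<phi>' integrable_on {a..b} \<and> \<phi> b - \<phi> a = integral {a..b} \<phi>')"

definition Hm1norm :: "(real \<Rightarrow> complex) \<Rightarrow> real" where
  "Hm1norm F = Sup {cmod (integral {0<..} (\<lambda>r. F r * cnj (\<phi> r))) | \<phi> \<phi>'.
                     H10 \<phi> \<phi>' \<and> H1norm \<phi> \<phi>' \<le> 1}"

definition H2loc :: "(real \<Rightarrow> complex) \<Rightarrow> (real \<Rightarrow> complex) \<Rightarrow> (real \<Rightarrow> complex) \<Rightarrow> bool" where
  "H2loc w w' w'' \<longleftrightarrow> (\<forall>r>0. (w has_vector_derivative w' r) (at r)) \<and>
     (\<forall>a b. 0 < a \<and> a \<le> b \<longrightarrow> L2_on {a..b} w'' \<and> w'' integrable_on {a..b} \<and>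
            w' b - w' a = integral {a..b} w'')"

definition Vk :: "int \<Rightarrow> real \<Rightarrow> real" where
  "Vk k r = (real_of_int k ^ 2 - 1/4) / r\<^sup>2 + r\<^sup>2 / 16 - 1/2"

definition Dk :: "int \<Rightarrow> real \<Rightarrow> (real \<Rightarrow> complex) \<Rightarrow> (real \<Rightarrow> complex) \<Rightarrow> (real \<Rightarrow> complex) \<Rightarrow> bool" where
  "Dk k \<beta> w w' w'' \<longleftrightarrow> H2loc w w' w'' \<and> L2_on {0<..} w \<and>
     L2_on {0<..} (\<lambda>r. - w'' r + of_real (Vk k r) * w r + \<i> * of_real \<beta> * w r / of_real (r\<^sup>2))"

definition Fk :: "int \<Rightarrow> real \<Rightarrow> real \<Rightarrow> (real \<Rightarrow> complex) \<Rightarrow> (real \<Rightarrow> complex) \<Rightarrow> real \<Rightarrow> complex" where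
  "Fk k \<beta> lam w w'' r = - (w'' r - of_real (Vk k r) * w r) + \<i> * of_real \<beta> * of_real (1 / r\<^sup>2 - lam) * w r"

end

theory Submission
  imports Defs
begin

lemma acprod:
  fixes W E E' g :: "real \<Rightarrow> complex"
  assumes ab: "a \<le> b"
    and g: "g absolutely_integrable_on {a..b}"
    and W: "\<And>x y. a \<le> x \<Longrightarrow> x \<le> y \<Longrightarrow> y \<le> b \<Longrightarrow> W y - W x = integral {x..y} g"
    and E: "\<And>x. x \<in> {a..b} \<Longrightarrow> (E has_vector_derivative E' x) (at x within {a..b})"
    and E'c: "continuous_on {a..b} E'"
  shows "((\<lambda>x. E' x * W x + E x * g x) has_integral (E b * W b - E a * W a)) {a..b}"
proof -
  have gi: "g integrable_on {a..b}" using g by (simp add: absolutely_integrable_on_def)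
  have ng: "(\<lambda>x. norm (g x)) integrable_on {a..b}" using g by (simp add: absolutely_integrable_on_def)
  have gsub: "g integrable_on {x..y}" if "a \<le> x" "y \<le> b" for x y
    using integrable_on_subinterval[OF gi] that by auto
  have ngsub: "(\<lambda>x. norm (g x)) integrable_on {x..y}" if "a \<le> x" "y \<le> b" for x y
    using integrable_on_subinterval[OF ng] that by auto
  have Wc: "continuous_on {a..b} W"
  proof -
    have c1: "continuous_on {a..b} (\<lambda>x. integral {a..x} g)"
      by (rule indefinite_integral_continuous_1[OF gi])
    have c2: "continuous_on {a..b} (\<lambda>x. W a + integral {a..x} g)"
      by (rule continuous_on_add[OF continuous_on_const c1])
    have eq: "W a + integral {a..x} g = W x" if "x \<in> {a..b}" for x
    proof -
      have "W x - W a = integral {a..x} g" using W[of a x] that by auto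
      then show ?thesis by (metis diff_add_cancel add.commute)
    qed
    show ?thesis using continuous_on_eq[OF c2 eq] by blast
  qed
  have Ec: "continuous_on {a..b} E"
    using E has_vector_derivative_continuous continuous_on_eq_continuous_within by blast
  obtain M where M: "M > 0" "\<And>x. x \<in> {a..b} \<Longrightarrow> norm (E' x) \<le> M"
    using compact_imp_bounded[OF compact_continuous_image[OF E'c compact_Icc]]
    by (metis bounded_pos imageI)
  have I1: "(\<lambda>x. E' x * W x) integrable_on {a..b}"
    by (intro integrable_continuous_interval continuous_intros E'c Wc)
  have I2: "(\<lambda>x. E x * g x) absolutely_integrable_on {a..b}"
  proof (rule absolutely_integrable_bounded_measurable_product[OF bilinear_times])
    show "E \<in> borel_measurable (lebesgue_on {a..b})"
      by (rule continuous_imp_measurable_on_sets_lebesgue[OF Ec]) auto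
    show "bounded (E ` {a..b})"
      by (intro compact_imp_bounded compact_continuous_image Ec compact_Icc)
  qed (use g in auto)
  then have I2': "(\<lambda>x. E x * g x) integrable_on {a..b}"
    by (simp add: absolutely_integrable_on_def)
  define H where "H = (\<lambda>x. E' x * W x + E x * g x)"
  have HI: "H integrable_on {a..b}" unfolding H_def using I1 I2' by (rule integrable_add)
  have Hsub: "H integrable_on {x..y}" if "a \<le> x" "y \<le> b" for x y
    using integrable_on_subinterval[OF HI] that by auto
  have FE: "E y - E x = integral {x..y} E'" if "a \<le> x" "x \<le> y" "y \<le> b" for x y
  proof -
    have "(E' has_integral E y - E x) {x..y}"
      apply (rule fundamental_theorem_of_calculus[OF that(2)])
      apply (rule has_vector_derivative_within_subset[OF E])
      using that by auto
    then show ?thesis by (simp add: integral_unique)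
  qed
  have E'sub: "E' integrable_on {x..y}" if "a \<le> x" "x \<le> y" "y \<le> b" for x y
    using E'c that by (intro integrable_continuous_interval) (auto intro: continuous_on_subset)
  define \<rho> where "\<rho> = (\<lambda>x. integral {a..x} (\<lambda>t. norm (g t)))"
  have \<rho>c: "continuous_on {a..b} \<rho>"
    unfolding \<rho>_def by (rule indefinite_integral_continuous_1[OF ng])
  define \<Psi> where "\<Psi> = (\<lambda>x. E x * W x - integral {a..x} H)"
  have key: "norm (\<Psi> y - \<Psi> x) \<le> 2 * M * (y - x) * (\<rho> y - \<rho> x)"
    if xy: "a \<le> x" "x \<le> y" "y \<le> b" for x y
  proof -
    define D where "D = integral {x..y} (\<lambda>t. norm (g t))"
    have D: "\<rho> y - \<rho> x = D"
      unfolding \<rho>_def D_def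
      using Henstock_Kurzweil_Integration.integral_combine[of a x y "\<lambda>t. norm (g t)"] ngsub[of a y] xy
      by auto
    have Hc: "integral {a..y} H = integral {a..x} H + integral {x..y} H"
      using Henstock_Kurzweil_Integration.integral_combine[of a x y H] Hsub[of a y] xy by auto
    have gxy: "g integrable_on {x..y}" "(\<lambda>t. norm (g t)) integrable_on {x..y}"
      using gsub ngsub xy by auto
    have Wxy: "(\<lambda>t. E' t * W t) integrable_on {x..y}" "(\<lambda>t. E t * g t) integrable_on {x..y}"
      using integrable_on_subinterval[OF I1] integrable_on_subinterval[OF I2'] xy by auto
    have E'xy: "E' integrable_on {x..y}" using E'sub xy by auto
    have i1: "(\<lambda>t. E' t * (W y - W t)) integrable_on {x..y}"
      using E'c Wc xy by (intro integrable_continuous_interval continuous_intros) (auto intro: continuous_on_subset)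
    have i2: "(\<lambda>t. (E x - E t) * g t) integrable_on {x..y}"
    proof -
      have "(\<lambda>t. E x * g t - E t * g t) integrable_on {x..y}"
        using gxy Wxy by (intro integrable_diff Henstock_Kurzweil_Integration.integrable_on_mult_right) auto
      then show ?thesis by (simp add: algebra_simps)
    qed
    have eq: "\<Psi> y - \<Psi> x = integral {x..y} (\<lambda>t. E' t * (W y - W t)) + integral {x..y} (\<lambda>t. (E x - E t) * g t)"
    proof -
      have "\<Psi> y - \<Psi> x = (E y - E x) * W y + E x * (W y - W x) - integral {x..y} H"
        unfolding \<Psi>_def Hc by (simp add: algebra_simps)
      also have "\<dots> = integral {x..y} E' * W y + E x * integral {x..y} g
           - (integral {x..y} (\<lambda>t. E' t * W t) + integral {x..y} (\<lambda>t. E t * g t))"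
        using FE[OF xy] W[OF xy] Wxy unfolding H_def by (simp add: integral_add)
      also have "\<dots> = (integral {x..y} (\<lambda>t. E' t * W y) - integral {x..y} (\<lambda>t. E' t * W t))
           + (integral {x..y} (\<lambda>t. E x * g t) - integral {x..y} (\<lambda>t. E t * g t))"
        by (simp add: integral_mult_left integral_mult_right)
      also have "\<dots> = integral {x..y} (\<lambda>t. E' t * W y - E' t * W t)
           + integral {x..y} (\<lambda>t. E x * g t - E t * g t)"
        using Wxy E'xy gxy
        by (simp add: integral_diff Henstock_Kurzweil_Integration.integrable_on_mult_left Henstock_Kurzweil_Integration.integrable_on_mult_right)
      also have "\<dots> = integral {x..y} (\<lambda>t. E' t * (W y - W t)) + integral {x..y} (\<lambda>t. (E x - E t) * g t)"
        by (simp add: algebra_simps)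
      finally show ?thesis .
    qed
    have b1: "norm (integral {x..y} (\<lambda>t. E' t * (W y - W t))) \<le> M * D * (y - x)"
    proof -
      have "norm (integral {x..y} (\<lambda>t. E' t * (W y - W t))) \<le> integral {x..y} (\<lambda>t. M * D)"
      proof (rule integral_norm_bound_integral[OF i1])
        fix t assume t: "t \<in> {x..y}"
        have "norm (W y - W t) = norm (integral {t..y} g)" using W[of t y] t xy by auto
        also have "\<dots> \<le> integral {t..y} (\<lambda>t. norm (g t))"
          using gsub ngsub t xy by (intro integral_norm_bound_integral) auto
        also have "\<dots> \<le> D" unfolding D_def
          using t xy ngsub by (intro integral_subset_le) auto
        finally have "norm (W y - W t) \<le> D" .
        then show "norm (E' t * (W y - W t)) \<le> M * D"
          using M(1) M(2)[of t] t xy by (auto simp: norm_mult intro!: mult_mono)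
      qed auto
      then show ?thesis using xy by (simp add: mult.commute mult.left_commute)
    qed
    have b2: "norm (integral {x..y} (\<lambda>t. (E x - E t) * g t)) \<le> M * (y - x) * D"
    proof -
      have "norm (integral {x..y} (\<lambda>t. (E x - E t) * g t)) \<le> integral {x..y} (\<lambda>t. M * (y - x) * norm (g t))"
      proof (rule integral_norm_bound_integral[OF i2])
        fix t assume t: "t \<in> {x..y}"
        have "norm (E x - E t) = norm (integral {x..t} E')" using FE[of x t] t xy
          by (metis atLeastAtMost_iff norm_minus_commute order_trans)
        also have "\<dots> \<le> integral {x..t} (\<lambda>_. M)"
          using E'sub[of x t] t xy M by (intro integral_norm_bound_integral) auto
        also have "\<dots> \<le> M * (y - x)" using t M by auto
        finally have "norm (E x - E t) \<le> M * (y - x)" .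
        then show "norm ((E x - E t) * g t) \<le> M * (y - x) * norm (g t)"
          by (simp add: norm_mult mult_right_mono)
      qed (use gxy in \<open>intro Henstock_Kurzweil_Integration.integrable_on_mult_right\<close>)
      also have "\<dots> = M * (y - x) * D" unfolding D_def by simp
      finally show ?thesis .
    qed
    have "norm (\<Psi> y - \<Psi> x) \<le> M * D * (y - x) + M * (y - x) * D"
      unfolding eq using b1 b2 norm_triangle_le by (smt (verit) norm_triangle_ineq)
    then show ?thesis using D by (simp add: algebra_simps)
  qed
  have key2: "norm (\<Psi> y - \<Psi> x) \<le> 2 * M * norm (y - x) * norm (\<rho> y - \<rho> x)"
    if "x \<in> {a..b}" "y \<in> {a..b}" for x y
  proof (cases "x \<le> y")
    case True
    have "0 \<le> \<rho> y - \<rho> x"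
    proof -
      have "\<rho> y - \<rho> x = integral {x..y} (\<lambda>t. norm (g t))"
        unfolding \<rho>_def
        using Henstock_Kurzweil_Integration.integral_combine[of a x y "\<lambda>t. norm (g t)"] ngsub[of a y] that True
        by auto
      also have "\<dots> \<ge> 0" by (rule integral_nonneg) (use ngsub that True in auto)
      finally show ?thesis by simp
    qed
    then show ?thesis using key[of x y] that True by auto
  next
    case False
    have "0 \<le> \<rho> x - \<rho> y"
    proof -
      have "\<rho> x - \<rho> y = integral {y..x} (\<lambda>t. norm (g t))"
        unfolding \<rho>_def
        using Henstock_Kurzweil_Integration.integral_combine[of a y x "\<lambda>t. norm (g t)"] ngsub[of a x] that False
        by auto
      also have "\<dots> \<ge> 0" by (rule integral_nonneg) (use ngsub that False in auto)
      finally show ?thesis by simp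
    qed
    then show ?thesis using key[of y x] that False by (auto simp: norm_minus_commute abs_minus_commute)
  qed
  have deriv: "(\<Psi> has_derivative (\<lambda>h. 0)) (at x within {a..b})" if x: "x \<in> {a..b}" for x
    unfolding has_derivative_within
  proof (intro conjI)
    show "bounded_linear (\<lambda>h::real. 0::complex)" by simp
    have r: "(\<rho> \<longlongrightarrow> \<rho> x) (at x within {a..b})"
      using \<rho>c x by (simp add: continuous_on_def)
    have lim0: "((\<lambda>y. 2 * M * norm (\<rho> y - \<rho> x)) \<longlongrightarrow> 2 * M * norm (\<rho> x - \<rho> x)) (at x within {a..b})"
      by (intro tendsto_intros r)
    have lim: "((\<lambda>y. 2 * M * norm (\<rho> y - \<rho> x)) \<longlongrightarrow> 0) (at x within {a..b})"
      using lim0 by simp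
    show "((\<lambda>y. (1 / norm (y - x)) *\<^sub>R (\<Psi> y - (\<Psi> x + 0))) \<longlongrightarrow> 0) (at x within {a..b})"
    proof (rule Lim_null_comparison[OF _ lim])
      show "\<forall>\<^sub>F y in at x within {a..b}. norm ((1 / norm (y - x)) *\<^sub>R (\<Psi> y - (\<Psi> x + 0))) \<le> 2 * M * norm (\<rho> y - \<rho> x)"
        unfolding eventually_at_filter
      proof (intro always_eventually allI impI)
        fix y assume y: "y \<noteq> x" "y \<in> {a..b}"
        have "norm ((1 / norm (y - x)) *\<^sub>R (\<Psi> y - (\<Psi> x + 0))) = norm (\<Psi> y - \<Psi> x) / norm (y - x)"
          by simp
        also have "\<dots> \<le> 2 * M * norm (y - x) * norm (\<rho> y - \<rho> x) / norm (y - x)"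
          using key2[OF x y(2)] by (intro divide_right_mono) auto
        also have "\<dots> = 2 * M * norm (\<rho> y - \<rho> x)" using y by simp
        finally show "norm ((1 / norm (y - x)) *\<^sub>R (\<Psi> y - (\<Psi> x + 0))) \<le> 2 * M * norm (\<rho> y - \<rho> x)" .
      qed
    qed
  qed
  obtain c where c: "\<forall>x\<in>{a..b}. \<Psi> x = c"
    using has_derivative_zero_constant[of "{a..b}" \<Psi>] deriv by auto
  then have "\<Psi> b = \<Psi> a" using ab by auto
  then have "integral {a..b} H = E b * W b - E a * W a"
    unfolding \<Psi>_def by (simp add: algebra_simps)
  then show ?thesis using HI unfolding H_def by (simp add: has_integral_integral)
qed


lemma eventually_in_Icc:
  fixes x :: real assumes "x > 0"
  shows "\<exists>N. \<forall>n\<ge>N. x \<in> {inverse (real (Suc n))..real (Suc n)}"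
proof -
  obtain N1 :: nat where N1: "x < real N1" using reals_Archimedean2 by blast
  obtain N2 :: nat where N2: "inverse x < real N2" using reals_Archimedean2 by blast
  show ?thesis
  proof (intro exI allI impI)
    fix n assume n: "max N1 N2 \<le> n"
    have "x \<le> real (Suc n)" using N1 n by linarith
    moreover have "inverse (real (Suc n)) \<le> x"
    proof -
      have "inverse x < real (Suc n)" using N2 n by linarith
      then have "inverse (real (Suc n)) < inverse (inverse x)"
        using assms by (intro less_imp_inverse_less) auto
      then show ?thesis using assms by simp
    qed
    ultimately show "x \<in> {inverse (real (Suc n))..real (Suc n)}" by auto
  qed
qed

lemma mono_approx:
  fixes f :: "real \<Rightarrow> real"
  assumes nn: "\<And>x. x > 0 \<Longrightarrow> 0 \<le> f x"
    and li: "\<And>a b. 0 < a \<Longrightarrow> f integrable_on {a..b}"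
    and bd: "\<And>n. integral {inverse (real (Suc n))..real (Suc n)} f \<le> M"
  shows "f integrable_on {0<..} \<and>
    (\<lambda>n. integral {inverse (real (Suc n))..real (Suc n)} f) \<longlonglongrightarrow> integral {0<..} f"
proof -
  define I where "I n = {inverse (real (Suc n))..real (Suc n)}" for n
  define fn where "fn n x = (if x \<in> I n then f x else 0)" for n x
  have pos: "x > 0" if "x \<in> I n" for x n
  proof -
    have h: "0 < inverse (real (Suc n))" by simp
    show ?thesis using that h unfolding I_def by (simp only: atLeastAtMost_iff) linarith
  qed
  have sub: "I n \<inter> {0<..} = I n" for n
    using pos by auto
  have int_n: "fn n integrable_on {0<..}" for n
    unfolding fn_def integrable_restrict_Int sub unfolding I_def by (rule li) simp
  have integral_n: "integral {0<..} (fn n) = integral (I n) f" for n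
    unfolding fn_def integral_restrict_Int sub ..
  have Isub: "I n \<subseteq> I (Suc n)" for n
  proof -
    have "inverse (real (Suc (Suc n))) \<le> inverse (real (Suc n))"
      by (intro le_imp_inverse_le) auto
    then show ?thesis unfolding I_def by auto
  qed
  have mono: "fn n x \<le> fn (Suc n) x" if "x \<in> {0<..}" for n x
    using Isub[of n] nn[of x] that unfolding fn_def by auto
  have lim: "(\<lambda>n. fn n x) \<longlonglongrightarrow> f x" if "x \<in> {0<..}" for x
  proof (rule tendsto_eventually)
    have x0: "0 < x" using that by simp
    obtain N where "\<forall>n\<ge>N. x \<in> I n" using eventually_in_Icc[OF x0] unfolding I_def by blast
    then show "\<forall>\<^sub>F n in sequentially. fn n x = f x"
      unfolding fn_def eventually_sequentially by auto
  qed
  have bdd: "bounded (range (\<lambda>n. integral {0<..} (fn n)))"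
  proof (rule boundedI)
    fix y assume "y \<in> range (\<lambda>n. integral {0<..} (fn n))"
    then obtain n where y: "y = integral (I n) f" using integral_n by auto
    have "0 \<le> integral (I n) f"
      using nn li pos unfolding I_def by (intro integral_nonneg) auto
    then show "norm y \<le> max M 0" using y bd[of n] unfolding I_def by auto
  qed
  from monotone_convergence_increasing[OF int_n mono lim bdd]
  show ?thesis unfolding integral_n I_def by auto
qed

lemma bound_int:
  fixes f :: "real \<Rightarrow> real"
  assumes nn: "\<And>x. x > 0 \<Longrightarrow> 0 \<le> f x"
    and li: "\<And>a b. 0 < a \<Longrightarrow> f integrable_on {a..b}"
    and H: "\<And>\<epsilon> \<delta> R. \<epsilon> > 0 \<Longrightarrow> \<delta> > 0 \<Longrightarrow> \<exists>a b. 0 < a \<and> a < \<delta> \<and> R < b \<and> integral {a..b} f \<le> M + \<epsilon>"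
  shows "f integrable_on {0<..} \<and> integral {0<..} f \<le> M"
proof -
  have le: "integral {a..b} f \<le> M" if a0: "0 < a" for a b
  proof (rule field_le_epsilon)
    fix \<epsilon> :: real assume e: "0 < \<epsilon>"
    obtain a' b' where ab: "0 < a'" "a' < a" "b < b'" "integral {a'..b'} f \<le> M + \<epsilon>"
      using H[OF e a0, of b] by auto
    have "integral {a..b} f \<le> integral {a'..b'} f"
    proof (cases "a \<le> b")
      case True
      then show ?thesis using ab li nn a0
        by (intro integral_subset_le) auto
    next
      case False
      then have "integral {a..b} f = 0" by simp
      moreover have "0 \<le> integral {a'..b'} f"
        using ab li nn by (intro integral_nonneg) auto
      ultimately show ?thesis by simp
    qed
    then show "integral {a..b} f \<le> M + \<epsilon>" using ab by simp
  qed
  have mc: "f integrable_on {0<..} \<and>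
    (\<lambda>n. integral {inverse (real (Suc n))..real (Suc n)} f) \<longlonglongrightarrow> integral {0<..} f"
    by (rule mono_approx[OF nn li le]) auto
  then have "integral {0<..} f \<le> M"
    by (intro LIMSEQ_le_const2[of "\<lambda>n. integral {inverse (real (Suc n))..real (Suc n)} f"])
       (auto intro!: le)
  with mc show ?thesis by auto
qed

lemma log_lower:
  fixes f :: "real \<Rightarrow> real"
  assumes f: "f integrable_on {0<..}" and nn: "\<And>x. x > 0 \<Longrightarrow> 0 \<le> f x"
    and td: "0 < t" "t \<le> d" and low: "\<And>x. t \<le> x \<Longrightarrow> x \<le> d \<Longrightarrow> c / x \<le> f x"
  shows "c * (ln d - ln t) \<le> integral {0<..} f"
proof -
  have hi: "((\<lambda>x. c / x) has_integral (c * ln d - c * ln t)) {t..d}"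
  proof (rule fundamental_theorem_of_calculus[OF td(2)])
    fix x assume x: "x \<in> {t..d}"
    then have "x > 0" using td by auto
    then show "((\<lambda>x. c * ln x) has_vector_derivative c / x) (at x within {t..d})"
      by (auto intro!: derivative_eq_intros simp: has_real_derivative_iff_has_vector_derivative[symmetric] field_simps)
  qed
  have fi: "f integrable_on {t..d}"
    using f td by (intro integrable_on_subinterval[OF f]) auto
  have "c * (ln d - ln t) = integral {t..d} (\<lambda>x. c / x)"
    using hi by (simp add: integral_unique algebra_simps)
  also have "\<dots> \<le> integral {t..d} f"
    using hi fi low by (intro integral_le) (auto simp: has_integral_integrable)
  also have "\<dots> \<le> integral {0<..} f"
    using fi f nn td by (intro integral_subset_le) auto
  finally show ?thesis .
qed

lemma exists_small_near0:
  fixes f :: "real \<Rightarrow> real"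
  assumes f: "f integrable_on {0<..}" and nn: "\<And>x. x > 0 \<Longrightarrow> 0 \<le> f x"
    and e: "\<epsilon> > 0" and d: "\<delta> > 0"
  shows "\<exists>a. 0 < a \<and> a < \<delta> \<and> a * f a < \<epsilon>"
proof (rule ccontr)
  assume neg: "\<not> ?thesis"
  then have low: "\<epsilon> / x \<le> f x" if "0 < x" "x < \<delta>" for x
  proof -
    have "\<epsilon> \<le> x * f x" using neg that by (meson not_less)
    then show ?thesis using that by (simp add: pos_divide_le_eq mult.commute)
  qed
  define I where "I = integral {0<..} f"
  have I0: "0 \<le> I / \<epsilon>" unfolding I_def using f nn e by (intro divide_nonneg_pos integral_nonneg) auto
  define d where "d = \<delta> / 2"
  define t where "t = d * exp (- (I / \<epsilon> + 1))"
  have d0: "0 < d" "d < \<delta>" using d unfolding d_def by auto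
  have t0: "0 < t" unfolding t_def using d0 by simp
  have "t \<le> d * 1" unfolding t_def using d0 I0
    by (intro mult_left_mono) (auto)
  then have td: "t \<le> d" by simp
  have "\<epsilon> * (ln d - ln t) \<le> I"
    unfolding I_def by (rule log_lower[OF f nn t0 td]) (use low d0 t0 in auto)
  moreover have "ln d - ln t = I / \<epsilon> + 1"
    unfolding t_def using d0 by (simp add: ln_mult)
  ultimately have "\<epsilon> * (I / \<epsilon> + 1) \<le> I" by simp
  then have "I + \<epsilon> \<le> I" using e by (simp add: distrib_left)
  then show False using e by simp
qed

lemma exists_small_nearinf:
  fixes f :: "real \<Rightarrow> real"
  assumes f: "f integrable_on {0<..}" and nn: "\<And>x. x > 0 \<Longrightarrow> 0 \<le> f x"
    and e: "\<epsilon> > 0"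
  shows "\<exists>b. R < b \<and> b * f b < \<epsilon>"
proof (rule ccontr)
  assume neg: "\<not> ?thesis"
  then have low: "\<epsilon> / x \<le> f x" if "R < x" "0 < x" for x
  proof -
    have "\<epsilon> \<le> x * f x" using neg that by (meson not_less)
    then show ?thesis using that by (simp add: pos_divide_le_eq mult.commute)
  qed
  define I where "I = integral {0<..} f"
  have I0: "0 \<le> I / \<epsilon>" unfolding I_def using f nn e by (intro divide_nonneg_pos integral_nonneg) auto
  define t where "t = max R 0 + 1"
  define d where "d = t * exp (I / \<epsilon> + 1)"
  have t0: "0 < t" unfolding t_def by auto
  have "t * 1 \<le> d" unfolding d_def using t0 I0
    by (intro mult_left_mono) (auto)
  then have td: "t \<le> d" by simp
  have "\<epsilon> * (ln d - ln t) \<le> I"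
    unfolding I_def by (rule log_lower[OF f nn t0 td]) (use low t0 in \<open>auto simp: t_def\<close>)
  moreover have "ln d - ln t = I / \<epsilon> + 1"
    unfolding d_def using t0 by (simp add: ln_mult)
  ultimately have "\<epsilon> * (I / \<epsilon> + 1) \<le> I" by simp
  then have "I + \<epsilon> \<le> I" using e by (simp add: distrib_left)
  then show False using e by simp
qed


lemma borel_cnj[measurable]:
  fixes g :: "'a \<Rightarrow> complex" assumes "g \<in> borel_measurable M"
  shows "(\<lambda>x. cnj (g x)) \<in> borel_measurable M"
  using borel_measurable_continuous_on[OF continuous_on_cnj[OF continuous_on_id] assms] by simp

lemma tail_conv:
  fixes f :: "real \<Rightarrow> 'b::euclidean_space"
  assumes f: "f absolutely_integrable_on {0<..}" and e: "\<epsilon> > 0"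
  shows "\<exists>\<delta>>0. \<exists>R. \<forall>a b. 0 < a \<and> a < \<delta> \<and> R < b \<longrightarrow>
            norm (integral {a..b} f - integral {0<..} f) < \<epsilon>"
proof -
  define g where "g x = norm (f x)" for x
  have fi: "f integrable_on {0<..}" using f by (simp add: absolutely_integrable_on_def)
  have gi: "g integrable_on {0<..}" using f unfolding g_def by (simp add: absolutely_integrable_on_def)
  have gli: "g integrable_on {a..b}" if "0 < a" for a b
    using that by (intro integrable_on_subinterval[OF gi]) auto
  have fli: "f integrable_on {a..b}" if "0 < a" for a b
    using that by (intro integrable_on_subinterval[OF fi]) auto
  have gnn: "\<And>x. x > 0 \<Longrightarrow> 0 \<le> g x" unfolding g_def by simp
  have bd: "integral {inverse (real (Suc n))..real (Suc n)} g \<le> integral {0<..} g" for n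
  proof -
    have h: "0 < inverse (real (Suc n))" by simp
    have "x > 0" if "x \<in> {inverse (real (Suc n))..real (Suc n)}" for x
      using that h by (simp only: atLeastAtMost_iff) linarith
    then have sub: "{inverse (real (Suc n))..real (Suc n)} \<subseteq> {0<..}" by auto
    show ?thesis
      using gli[of "inverse (real (Suc n))" "real (Suc n)"] gi gnn sub
      by (intro integral_subset_le) auto
  qed
  have conv: "(\<lambda>n. integral {inverse (real (Suc n))..real (Suc n)} g) \<longlonglongrightarrow> integral {0<..} g"
    using mono_approx[OF gnn gli bd] by auto
  then obtain N where N: "\<And>n. n \<ge> N \<Longrightarrow>
       norm (integral {inverse (real (Suc n))..real (Suc n)} g - integral {0<..} g) < \<epsilon>"
    using e unfolding LIMSEQ_iff by blast
  show ?thesis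
  proof (rule exI[of _ "inverse (real (Suc N))"], intro conjI)
    show "0 < inverse (real (Suc N))" by simp
    show "\<exists>R. \<forall>a b. 0 < a \<and> a < inverse (real (Suc N)) \<and> R < b \<longrightarrow>
            norm (integral {a..b} f - integral {0<..} f) < \<epsilon>"
    proof (rule exI[of _ "real (Suc N)"], intro allI impI)
    fix a b assume ab: "0 < a \<and> a < inverse (real (Suc N)) \<and> real (Suc N) < b"
    then have a0: "0 < a" by auto
    define hf where "hf x = (if x \<in> {a..b} then 0 else f x)" for x
    define hg where "hg x = (if x \<in> {a..b} then 0 else g x)" for x
    have sub: "{a..b} \<inter> {0<..} = {a..b}" using a0 by auto
    have r1: "(\<lambda>x. if x \<in> {a..b} then f x else 0) integrable_on {0<..}"
      unfolding integrable_restrict_Int sub using fli[OF a0] .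
    have r1i: "integral {0<..} (\<lambda>x. if x \<in> {a..b} then f x else 0) = integral {a..b} f"
      unfolding integral_restrict_Int sub ..
    have r2: "(\<lambda>x. if x \<in> {a..b} then g x else 0) integrable_on {0<..}"
      unfolding integrable_restrict_Int sub using gli[OF a0] .
    have r2i: "integral {0<..} (\<lambda>x. if x \<in> {a..b} then g x else 0) = integral {a..b} g"
      unfolding integral_restrict_Int sub ..
    have hfe: "hf = (\<lambda>x. f x - (if x \<in> {a..b} then f x else 0))" unfolding hf_def by auto
    have hge: "hg = (\<lambda>x. g x - (if x \<in> {a..b} then g x else 0))" unfolding hg_def by auto
    have hfi: "hf integrable_on {0<..}" unfolding hfe using fi r1 by (rule integrable_diff)
    have hgi: "hg integrable_on {0<..}" unfolding hge using gi r2 by (rule integrable_diff)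
    have "integral {0<..} hf = integral {0<..} f - integral {a..b} f"
      unfolding hfe using fi r1 r1i by (simp add: integral_diff)
    then have "norm (integral {a..b} f - integral {0<..} f) = norm (integral {0<..} hf)"
      by (simp add: norm_minus_commute)
    also have "\<dots> \<le> integral {0<..} hg"
      using hfi hgi by (intro integral_norm_bound_integral) (auto simp: hf_def hg_def g_def)
    also have "\<dots> = integral {0<..} g - integral {a..b} g"
      unfolding hge using gi r2 r2i by (simp add: integral_diff)
    also have "\<dots> \<le> integral {0<..} g - integral {inverse (real (Suc N))..real (Suc N)} g"
    proof -
      have "integral {inverse (real (Suc N))..real (Suc N)} g \<le> integral {a..b} g"
        using ab gli[OF a0] gli[of "inverse (real (Suc N))" "real (Suc N)"] gnn
        by (intro integral_subset_le) auto
      then show ?thesis by simp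
    qed
    also have "\<dots> < \<epsilon>" using N[of N] by auto
    finally show "norm (integral {a..b} f - integral {0<..} f) < \<epsilon>" .
  qed
  qed
qed

lemma cs_real:
  fixes A B I :: real
  assumes A: "A \<ge> 0" and B: "B \<ge> 0" and H: "\<And>t. t > 0 \<Longrightarrow> I \<le> (t * A + B / t) / 2"
  shows "I \<le> sqrt A * sqrt B"
proof (cases "A > 0 \<and> B > 0")
  case True
  define a where "a = sqrt A"
  define b where "b = sqrt B"
  have a: "a > 0" "a * a = A" using True A unfolding a_def by auto
  have b: "b > 0" "b * b = B" using True B unfolding b_def by auto
  define t where "t = b / a"
  have t: "t > 0" using a b unfolding t_def by simp
  have "t * A = (b / a) * (a * a)" using a by (simp add: t_def)
  also have "\<dots> = a * b" using a(1) by (simp add: field_simps)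
  finally have 1: "t * A = a * b" .
  have "B / t = (b * b) / (b / a)" using b by (simp add: t_def)
  also have "\<dots> = a * b" using a(1) b(1) by (simp add: field_simps)
  finally have 2: "B / t = a * b" .
  show ?thesis using H[OF t] 1 2 unfolding a_def b_def by simp
next
  case False
  then have z: "A = 0 \<or> B = 0" using A B by auto
  have "I \<le> 0"
  proof (rule ccontr)
    assume "\<not> I \<le> 0"
    then have I: "I > 0" by simp
    show False
    proof (cases "A = 0")
      case True
      define t where "t = (B + 1) / I"
      have t: "t > 0" using I B unfolding t_def by simp
      have "B / t = B * I / (B + 1)" unfolding t_def using I B by simp
      also have "\<dots> \<le> I"
      proof -
        have "B * I \<le> I * (B + 1)" using I by (simp add: algebra_simps)
        then show ?thesis using B by (simp add: pos_divide_le_eq)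
      qed
      finally have "I \<le> I / 2" using H[OF t] True by simp
      then show False using I by simp
    next
      case False
      then have B0: "B = 0" using z by simp
      define t where "t = I / (A + 1)"
      have t: "t > 0" using I A unfolding t_def by simp
      have "t * A = I * A / (A + 1)" unfolding t_def by simp
      also have "\<dots> \<le> I"
      proof -
        have "I * A \<le> I * (A + 1)" using I by (simp add: algebra_simps)
        then show ?thesis using A by (simp add: pos_divide_le_eq)
      qed
      finally have "I \<le> I / 2" using H[OF t] B0 by simp
      then show False using I by simp
    qed
  qed
  then show ?thesis using z by auto
qed

lemma L2_borel:
  assumes "L2_on S f" "S \<in> sets lebesgue"
  shows "f \<in> borel_measurable (lebesgue_on S)"
  using assms by (simp add: L2_on_def measurable_on_iff_borel_measurable)

lemma L2_prod:
  fixes f g :: "real \<Rightarrow> complex"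
  assumes f: "L2_on S f" and g: "L2_on S g" and S: "S \<in> sets lebesgue"
  shows "(\<lambda>x. f x * cnj (g x)) absolutely_integrable_on S"
    and "(\<lambda>x. norm (f x) * norm (g x)) integrable_on S"
    and "integral S (\<lambda>x. norm (f x) * norm (g x))
           \<le> sqrt (integral S (\<lambda>x. (norm (f x))\<^sup>2)) * sqrt (integral S (\<lambda>x. (norm (g x))\<^sup>2))"
proof -
  have [measurable]: "f \<in> borel_measurable (lebesgue_on S)" "g \<in> borel_measurable (lebesgue_on S)"
    using L2_borel f g S by auto
  have f2: "(\<lambda>x. (norm (f x))\<^sup>2) integrable_on S" and g2: "(\<lambda>x. (norm (g x))\<^sup>2) integrable_on S"
    using f g by (auto simp: L2_on_def)
  have dom: "(\<lambda>x. ((norm (f x))\<^sup>2 + (norm (g x))\<^sup>2) / 2) integrable_on S"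
    using f2 g2 by (intro Henstock_Kurzweil_Integration.integrable_on_divide integrable_add)
  have pb: "norm (f x) * norm (g x) \<le> ((norm (f x))\<^sup>2 + (norm (g x))\<^sup>2) / 2" for x
    using sum_squares_bound[of "norm (f x)" "norm (g x)"] by (simp add: power2_eq_square)
  show "(\<lambda>x. f x * cnj (g x)) absolutely_integrable_on S"
  proof (rule measurable_bounded_by_integrable_imp_absolutely_integrable[OF _ S dom])
    show "(\<lambda>x. f x * cnj (g x)) \<in> borel_measurable (lebesgue_on S)" by measurable
    show "norm (f x * cnj (g x)) \<le> ((norm (f x))\<^sup>2 + (norm (g x))\<^sup>2) / 2" for x
      using pb[of x] by (simp add: norm_mult)
  qed
  show pi: "(\<lambda>x. norm (f x) * norm (g x)) integrable_on S"
  proof (rule measurable_bounded_by_integrable_imp_integrable[OF _ dom _ S])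
    show "(\<lambda>x. norm (f x) * norm (g x)) \<in> borel_measurable (lebesgue_on S)" by measurable
    show "norm (norm (f x) * norm (g x)) \<le> ((norm (f x))\<^sup>2 + (norm (g x))\<^sup>2) / 2" for x
      using pb[of x] by simp
  qed
  show "integral S (\<lambda>x. norm (f x) * norm (g x))
           \<le> sqrt (integral S (\<lambda>x. (norm (f x))\<^sup>2)) * sqrt (integral S (\<lambda>x. (norm (g x))\<^sup>2))"
  proof (rule cs_real)
    show "0 \<le> integral S (\<lambda>x. (norm (f x))\<^sup>2)" using f2 by (intro integral_nonneg) auto
    show "0 \<le> integral S (\<lambda>x. (norm (g x))\<^sup>2)" using g2 by (intro integral_nonneg) auto
    fix t :: real assume t: "t > 0"
    have pt: "norm (f x) * norm (g x) \<le> (t * (norm (f x))\<^sup>2 + (norm (g x))\<^sup>2 / t) / 2" for x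
    proof -
      have "0 \<le> (t * norm (f x) - norm (g x))\<^sup>2" by simp
      then have "2 * t * (norm (f x) * norm (g x)) \<le> t * (t * (norm (f x))\<^sup>2) + (norm (g x))\<^sup>2"
        by (simp add: power2_eq_square algebra_simps)
      then show ?thesis using t by (simp add: field_simps)
    qed
    have "integral S (\<lambda>x. norm (f x) * norm (g x))
        \<le> integral S (\<lambda>x. (t * (norm (f x))\<^sup>2 + (norm (g x))\<^sup>2 / t) / 2)"
      using pi f2 g2 pt
      by (intro integral_le) (auto intro!: Henstock_Kurzweil_Integration.integrable_on_divide integrable_add Henstock_Kurzweil_Integration.integrable_on_mult_right)
    also have "\<dots> = (t * integral S (\<lambda>x. (norm (f x))\<^sup>2) + integral S (\<lambda>x. (norm (g x))\<^sup>2) / t) / 2"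
      using f2 g2
      by (simp add: integral_add integral_divide Henstock_Kurzweil_Integration.integrable_on_divide Henstock_Kurzweil_Integration.integrable_on_mult_right)
    finally show "integral S (\<lambda>x. norm (f x) * norm (g x))
        \<le> (t * integral S (\<lambda>x. (norm (f x))\<^sup>2) + integral S (\<lambda>x. (norm (g x))\<^sup>2) / t) / 2" .
  qed
qed


locale wset =
  fixes k :: int and \<beta> :: real and w w' w'' :: "real \<Rightarrow> complex"
  assumes k1: "1 \<le> \<bar>k\<bar>"
    and deriv: "\<And>r. r > 0 \<Longrightarrow> (w has_vector_derivative w' r) (at r)"
    and w''L2: "\<And>a b. 0 < a \<Longrightarrow> a \<le> b \<Longrightarrow> L2_on {a..b} w''"
    and w''int: "\<And>a b. 0 < a \<Longrightarrow> a \<le> b \<Longrightarrow> w'' integrable_on {a..b}"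
    and w'eq: "\<And>a b. 0 < a \<Longrightarrow> a \<le> b \<Longrightarrow> w' b - w' a = integral {a..b} w''"
    and wL2: "L2_on {0<..} w"
    and GL2: "L2_on {0<..} (\<lambda>r. - w'' r + of_real (Vk k r) * w r + \<i> * of_real \<beta> * w r / of_real (r\<^sup>2))"
begin

definition G where "G r = - w'' r + of_real (Vk k r) * w r + \<i> * of_real \<beta> * w r / of_real (r\<^sup>2)"
definition h where "h r = (cmod (w r))\<^sup>2"
definition hd where "hd r = 2 * Re (w' r * cnj (w r))"

lemma w''abs: assumes "0 < a" shows "w'' absolutely_integrable_on {a..b}"
proof (cases "a \<le> b")
  case True
  have L: "L2_on {a..b} w''" using w''L2[OF assms True] .
  show ?thesis
  proof (rule measurable_bounded_by_integrable_imp_absolutely_integrable)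
    show "w'' \<in> borel_measurable (lebesgue_on {a..b})" using L2_borel[OF L] by simp
    show "(\<lambda>x. (1 + (cmod (w'' x))\<^sup>2) / 2) integrable_on {a..b}"
      using L unfolding L2_on_def
      by (intro Henstock_Kurzweil_Integration.integrable_on_divide integrable_add) auto
    show "cmod (w'' x) \<le> (1 + (cmod (w'' x))\<^sup>2) / 2" for x
      using sum_squares_bound[of 1 "cmod (w'' x)"] by (simp add: power2_eq_square)
  qed auto
next
  case False
  then show ?thesis by simp
qed

lemma w'cont: assumes "0 < a" shows "continuous_on {a..b} w'"
proof (cases "a \<le> b")
  case True
  have gi: "w'' integrable_on {a..b}" using w''int[OF assms True] .
  have c2: "continuous_on {a..b} (\<lambda>x. w' a + integral {a..x} w'')"
    by (rule continuous_on_add[OF continuous_on_const indefinite_integral_continuous_1[OF gi]])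
  have eq: "w' a + integral {a..x} w'' = w' x" if "x \<in> {a..b}" for x
  proof -
    have "w' x - w' a = integral {a..x} w''" using w'eq[of a x] that assms by auto
    then show ?thesis by (metis diff_add_cancel add.commute)
  qed
  show ?thesis using continuous_on_eq[OF c2 eq] by blast
next
  case False
  then show ?thesis by simp
qed

lemma w'isCont: assumes "0 < r" shows "isCont w' r"
proof -
  have "continuous_on {r/2..2*r} w'" using w'cont[of "r/2" "2*r"] assms by simp
  moreover have "r \<in> interior {r/2..2*r}" using assms by auto
  ultimately show ?thesis by (rule continuous_on_interior)
qed

lemma w'cont_on: assumes "S \<subseteq> {0<..}" shows "continuous_on S w'"
  using w'isCont assms by (intro continuous_at_imp_continuous_on) auto

lemma wcont_on: assumes "S \<subseteq> {0<..}" shows "continuous_on S w"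
proof (intro continuous_at_imp_continuous_on ballI)
  fix x assume "x \<in> S" then have "x > 0" using assms by auto
  then show "isCont w x" using deriv has_vector_derivative_continuous by blast
qed

lemma hderiv: assumes "0 < r" shows "(h has_real_derivative hd r) (at r)"
proof -
  have p: "((\<lambda>x. w x * cnj (w x)) has_vector_derivative (w r * cnj (w' r) + w' r * cnj (w r))) (at r)"
    by (rule has_vector_derivative_mult[OF deriv[OF assms] has_vector_derivative_cnj[OF deriv[OF assms]]])
  have "((\<lambda>x. Re (w x * cnj (w x))) has_vector_derivative Re (w r * cnj (w' r) + w' r * cnj (w r))) (at r)"
    by (rule bounded_linear.has_vector_derivative[OF bounded_linear_Re p])
  moreover have "(\<lambda>x. Re (w x * cnj (w x))) = h"
    unfolding h_def by (auto simp flip: complex_norm_square)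
  moreover have "Re (w r * cnj (w' r) + w' r * cnj (w r)) = hd r"
    unfolding hd_def by simp
  ultimately show ?thesis by (simp add: has_real_derivative_iff_has_vector_derivative)
qed

lemma hdcont_on: assumes "S \<subseteq> {0<..}" shows "continuous_on S hd"
  unfolding hd_def using w'cont_on[OF assms] wcont_on[OF assms]
  by (intro continuous_intros)

lemma hcont_on: assumes "S \<subseteq> {0<..}" shows "continuous_on S h"
  unfolding h_def using wcont_on[OF assms] by (intro continuous_intros)

lemma Vk_cont: assumes "S \<subseteq> {0<..}" shows "continuous_on S (Vk k)"
  unfolding Vk_def using assms by (intro continuous_intros) auto

lemma normsq_expand:
  fixes z u :: complex and t :: real
  shows "(cmod (z - of_real t * u))\<^sup>2 = (cmod z)\<^sup>2 - t * (2 * Re (z * cnj u)) + t\<^sup>2 * (cmod u)\<^sup>2"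
  unfolding cmod_power2 by (simp add: power2_eq_square algebra_simps)

lemma Re_cnj_mult_self: "Re (cnj z * z) = (cmod z)\<^sup>2"
  unfolding cmod_power2 by (simp add: power2_eq_square)

lemma Gpt:
  assumes "0 < r"
  shows "Re (G r * cnj (w r)) = - Re (cnj (w r) * w'' r) + Vk k r * h r"
proof -
  have ww: "w r * cnj (w r) = of_real (h r)" unfolding h_def by (rule complex_norm_square[symmetric])
  have "G r * cnj (w r) = - (cnj (w r) * w'' r) + of_real (Vk k r) * (w r * cnj (w r))
        + \<i> * of_real \<beta> * (w r * cnj (w r)) / of_real (r\<^sup>2)"
    by (simp add: G_def algebra_simps)
  also have "\<dots> = - (cnj (w r) * w'' r) + of_real (Vk k r * h r) + \<i> * of_real (\<beta> * h r / r\<^sup>2)"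
    unfolding ww by simp
  finally show ?thesis by simp
qed

lemma Gint:
  assumes "0 < a"
  shows "(\<lambda>r. G r * cnj (w r)) integrable_on {a..b}"
proof -
  have sub: "{a..b} \<subseteq> {0<..}" using assms by auto
  have wc: "continuous_on {a..b} w" using wcont_on[OF sub] .
  have i1: "(\<lambda>x. cnj (w x) * w'' x) absolutely_integrable_on {a..b}"
  proof (rule absolutely_integrable_bounded_measurable_product[OF bilinear_times])
    show "(\<lambda>x. cnj (w x)) \<in> borel_measurable (lebesgue_on {a..b})"
      by (rule continuous_imp_measurable_on_sets_lebesgue) (use wc in \<open>auto intro!: continuous_intros\<close>)
    show "bounded ((\<lambda>x. cnj (w x)) ` {a..b})"
      by (intro compact_imp_bounded compact_continuous_image compact_Icc) (use wc in \<open>auto intro!: continuous_intros\<close>)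
  qed (use w''abs[OF assms] in auto)
  have i2: "(\<lambda>r. (of_real (Vk k r) * w r + \<i> * of_real \<beta> * w r / of_real (r\<^sup>2)) * cnj (w r)) integrable_on {a..b}"
    using Vk_cont[OF sub] wc sub by (intro integrable_continuous_interval continuous_intros) auto
  have "(\<lambda>r. - (cnj (w r) * w'' r) + (of_real (Vk k r) * w r + \<i> * of_real \<beta> * w r / of_real (r\<^sup>2)) * cnj (w r)) integrable_on {a..b}"
    using i1 i2 by (intro integrable_add integrable_neg) (auto simp: absolutely_integrable_on_def)
  moreover have "(\<lambda>r. - (cnj (w r) * w'' r) + (of_real (Vk k r) * w r + \<i> * of_real \<beta> * w r / of_real (r\<^sup>2)) * cnj (w r))
     = (\<lambda>r. G r * cnj (w r))"
    by (rule ext) (simp add: G_def algebra_simps)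
  ultimately show ?thesis by simp
qed

lemma ident:
  assumes a0: "0 < a" and ab: "a \<le> b"
    and qd: "\<And>x. x \<in> {a..b} \<Longrightarrow> (q has_real_derivative q' x) (at x)"
    and q'c: "continuous_on {a..b} q'"
  shows "Re (integral {a..b} (\<lambda>r. G r * cnj (w r))) =
     integral {a..b} (\<lambda>r. (cmod (w' r - of_real (q r) * w r))\<^sup>2)
   + integral {a..b} (\<lambda>r. (Vk k r - q' r - (q r)\<^sup>2) * h r)
   + (q b * h b - Re (w' b * cnj (w b))) - (q a * h a - Re (w' a * cnj (w a)))"
proof -
  have sub: "{a..b} \<subseteq> {0<..}" using a0 by auto
  have qc: "continuous_on {a..b} q"
    using qd by (intro continuous_at_imp_continuous_on ballI DERIV_isCont) auto
  have Wh: "w' y - w' x = integral {x..y} w''" if "a \<le> x" "x \<le> y" "y \<le> b" for x y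
    using w'eq[of x y] that a0 by auto
  have Eh: "((\<lambda>r. cnj (w r)) has_vector_derivative cnj (w' x)) (at x within {a..b})" if "x \<in> {a..b}" for x
  proof -
    have "x > 0" using that a0 by auto
    then have "(w has_vector_derivative w' x) (at x within {a..b})"
      using deriv has_vector_derivative_at_within by blast
    then show ?thesis by (rule has_vector_derivative_cnj)
  qed
  have E'h: "continuous_on {a..b} (\<lambda>r. cnj (w' r))"
    using w'cont[OF a0] by (rule continuous_on_cnj)
  have Hi: "((\<lambda>x. cnj (w' x) * w' x + cnj (w x) * w'' x) has_integral (cnj (w b) * w' b - cnj (w a) * w' a)) {a..b}"
    using acprod[where W=w' and E="\<lambda>r. cnj (w r)" and E'="\<lambda>r. cnj (w' r)" and g=w'', OF ab w''abs[OF a0] Wh Eh E'h] .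
  have J1: "((\<lambda>x. (cmod (w' x))\<^sup>2 + Re (cnj (w x) * w'' x)) has_integral
       (Re (cnj (w b) * w' b) - Re (cnj (w a) * w' a))) {a..b}"
  proof -
    have e1: "Re (cnj z * z + u) = (cmod z)\<^sup>2 + Re u" for z u :: complex
      unfolding cmod_power2 by (simp add: power2_eq_square)
    have e2: "Re (x - y) = Re x - Re y" for x y :: complex by simp
    show ?thesis using has_integral_linear[OF Hi bounded_linear_Re] by (simp only: o_def e1 e2)
  qed
  have J2: "((\<lambda>r. Re (G r * cnj (w r))) has_integral Re (integral {a..b} (\<lambda>r. G r * cnj (w r)))) {a..b}"
    using has_integral_linear[OF integrable_integral[OF Gint[OF a0]] bounded_linear_Re] by (simp add: o_def)
  have J3: "((\<lambda>r. q' r * h r + q r * hd r) has_integral (q b * h b - q a * h a)) {a..b}"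
  proof (rule fundamental_theorem_of_calculus[OF ab])
    fix x assume x: "x \<in> {a..b}"
    then have x0: "x > 0" using a0 by auto
    have "((\<lambda>x. q x * h x) has_real_derivative q' x * h x + q x * hd x) (at x)"
      by (rule DERIV_cong[OF DERIV_mult[OF qd[OF x] hderiv[OF x0]]]) (simp add: mult.commute)
    then show "((\<lambda>x. q x * h x) has_vector_derivative q' x * h x + q x * hd x) (at x within {a..b})"
      unfolding has_real_derivative_iff_has_vector_derivative by (rule has_vector_derivative_at_within)
  qed
  define A where "A r = (cmod (w' r - of_real (q r) * w r))\<^sup>2" for r
  define B where "B r = (Vk k r - q' r - (q r)\<^sup>2) * h r" for r
  have Ai: "A integrable_on {a..b}"
    unfolding A_def using w'cont[OF a0] wcont_on[OF sub] qc
    by (intro integrable_continuous_interval continuous_intros) auto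
  have Bi: "B integrable_on {a..b}"
    unfolding B_def using Vk_cont[OF sub] q'c qc hcont_on[OF sub]
    by (intro integrable_continuous_interval continuous_intros) auto
  have pt: "A r + B r = ((cmod (w' r))\<^sup>2 + Re (cnj (w r) * w'' r)) - (q' r * h r + q r * hd r) + Re (G r * cnj (w r))"
    if "r \<in> {a..b}" for r
  proof -
    have r0: "r > 0" using that a0 by auto
    have "A r = (cmod (w' r))\<^sup>2 - q r * hd r + (q r)\<^sup>2 * h r"
      unfolding A_def hd_def h_def by (rule normsq_expand)
    then show ?thesis unfolding B_def Gpt[OF r0] by (simp add: algebra_simps)
  qed
  have "((\<lambda>r. ((cmod (w' r))\<^sup>2 + Re (cnj (w r) * w'' r)) - (q' r * h r + q r * hd r) + Re (G r * cnj (w r))) has_integral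
        ((Re (cnj (w b) * w' b) - Re (cnj (w a) * w' a)) - (q b * h b - q a * h a) + Re (integral {a..b} (\<lambda>r. G r * cnj (w r))))) {a..b}"
    by (intro has_integral_add has_integral_diff J1 J2 J3)
  then have "((\<lambda>r. A r + B r) has_integral
        ((Re (cnj (w b) * w' b) - Re (cnj (w a) * w' a)) - (q b * h b - q a * h a) + Re (integral {a..b} (\<lambda>r. G r * cnj (w r))))) {a..b}"
    by (rule has_integral_eq[rotated]) (use pt in auto)
  moreover have "((\<lambda>r. A r + B r) has_integral (integral {a..b} A + integral {a..b} B)) {a..b}"
    using Ai Bi by (intro has_integral_add) (auto simp: has_integral_integral)
  ultimately have eq: "integral {a..b} A + integral {a..b} B =
     (Re (cnj (w b) * w' b) - Re (cnj (w a) * w' a)) - (q b * h b - q a * h a) + Re (integral {a..b} (\<lambda>r. G r * cnj (w r)))"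
    using has_integral_unique by blast
  have c: "Re (cnj z * u) = Re (u * cnj z)" for z u :: complex by (simp add: mult.commute)
  show ?thesis using eq unfolding A_def B_def c by simp
qed

end


lemma lebesgue_Ioi: "{0<..} \<in> sets (lebesgue :: real measure)" by simp

context wset
begin

definition P where "P = Re (integral {0<..} (\<lambda>r. G r * cnj (w r)))"
definition H where "H = integral {0<..} h"

lemma hI: "h integrable_on {0<..}"
  using wL2 unfolding L2_on_def h_def by auto

lemma hnn: "0 \<le> h x" unfolding h_def by simp

lemma hli: "0 < a \<Longrightarrow> h integrable_on {a..b}"
  by (rule integrable_on_subinterval[OF hI]) auto

lemma hsub: "0 < a \<Longrightarrow> integral {a..b} h \<le> H"
  unfolding H_def using hli hI hnn by (intro integral_subset_le) auto

lemma GL2': "L2_on {0<..} G"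
  using GL2 unfolding G_def[abs_def] .

lemma GwAbs: "(\<lambda>r. G r * cnj (w r)) absolutely_integrable_on {0<..}"
  using L2_prod(1)[OF GL2' wL2 lebesgue_Ioi] .

lemma convG:
  assumes e: "\<epsilon> > 0"
  shows "\<exists>\<delta>>0. \<exists>R. \<forall>a b. 0 < a \<and> a < \<delta> \<and> R < b \<longrightarrow> Re (integral {a..b} (\<lambda>r. G r * cnj (w r))) \<le> P + \<epsilon>"
proof -
  obtain \<delta> R where d: "\<delta> > 0" and H: "\<And>a b. 0 < a \<and> a < \<delta> \<and> R < b \<Longrightarrow>
     norm (integral {a..b} (\<lambda>r. G r * cnj (w r)) - integral {0<..} (\<lambda>r. G r * cnj (w r))) < \<epsilon>"
    using tail_conv[OF GwAbs e] by blast
  show ?thesis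
  proof (rule exI[of _ \<delta>], intro conjI d, rule exI[of _ R], intro allI impI)
    fix a b assume ab: "0 < a \<and> a < \<delta> \<and> R < b"
    have "Re (integral {a..b} (\<lambda>r. G r * cnj (w r))) - P
        = Re (integral {a..b} (\<lambda>r. G r * cnj (w r)) - integral {0<..} (\<lambda>r. G r * cnj (w r)))"
      unfolding P_def by simp
    also have "\<dots> \<le> norm (integral {a..b} (\<lambda>r. G r * cnj (w r)) - integral {0<..} (\<lambda>r. G r * cnj (w r)))"
      by (rule complex_Re_le_cmod)
    also have "\<dots> < \<epsilon>" using H[OF ab] .
    finally show "Re (integral {a..b} (\<lambda>r. G r * cnj (w r))) \<le> P + \<epsilon>" by simp
  qed
qed

lemma combine:
  fixes f B :: "real \<Rightarrow> real" and c :: real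
  assumes nn: "\<And>x. x > 0 \<Longrightarrow> 0 \<le> f x"
    and li: "\<And>a b. 0 < a \<Longrightarrow> f integrable_on {a..b}"
    and c0: "c \<ge> 0"
    and ineq: "\<And>a b. 0 < a \<Longrightarrow> a \<le> b \<Longrightarrow>
        integral {a..b} f \<le> Re (integral {a..b} (\<lambda>r. G r * cnj (w r))) + c * integral {a..b} h + B a - B b"
    and near0: "\<And>\<epsilon> \<delta>. \<epsilon> > 0 \<Longrightarrow> \<delta> > 0 \<Longrightarrow> \<exists>a. 0 < a \<and> a < \<delta> \<and> B a \<le> \<epsilon>"
    and nearinf: "\<And>\<epsilon> R. \<epsilon> > 0 \<Longrightarrow> \<exists>b. R < b \<and> - \<epsilon> \<le> B b"
  shows "f integrable_on {0<..} \<and> integral {0<..} f \<le> P + c * H"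
proof (rule bound_int[OF nn li])
  fix \<epsilon> \<delta> R :: real assume e: "\<epsilon> > 0" and d: "\<delta> > 0"
  have e3: "\<epsilon> / 3 > 0" using e by simp
  obtain \<delta>0 R0 where d0: "\<delta>0 > 0" and HG: "\<And>a b. 0 < a \<and> a < \<delta>0 \<and> R0 < b \<Longrightarrow>
      Re (integral {a..b} (\<lambda>r. G r * cnj (w r))) \<le> P + \<epsilon> / 3"
    using convG[OF e3] by blast
  obtain a where a: "0 < a" "a < min \<delta> \<delta>0" "B a \<le> \<epsilon> / 3"
    using near0[OF e3, of "min \<delta> \<delta>0"] d d0 by auto
  obtain b where b: "max (max R R0) a < b" "- (\<epsilon> / 3) \<le> B b"
    using nearinf[OF e3, of "max (max R R0) a"] by auto
  have ab: "a \<le> b" using b by auto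
  have "integral {a..b} f \<le> Re (integral {a..b} (\<lambda>r. G r * cnj (w r))) + c * integral {a..b} h + B a - B b"
    using ineq[OF a(1) ab] .
  also have "\<dots> \<le> (P + \<epsilon> / 3) + c * H + \<epsilon> / 3 + \<epsilon> / 3"
  proof -
    have "Re (integral {a..b} (\<lambda>r. G r * cnj (w r))) \<le> P + \<epsilon> / 3" using HG a b by auto
    moreover have "c * integral {a..b} h \<le> c * H" by (intro mult_left_mono hsub[OF a(1)] c0)
    ultimately show ?thesis using a b by linarith
  qed
  finally show "\<exists>a b. 0 < a \<and> a < \<delta> \<and> R < b \<and> integral {a..b} f \<le> P + c * H + \<epsilon>"
    using a b by (intro exI[of _ a] exI[of _ b]) auto
qed

lemma ksq: "1 \<le> (real_of_int k)\<^sup>2"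
proof -
  have "1 \<le> \<bar>real_of_int k\<bar>" using k1 by linarith
  then have "1 * 1 \<le> \<bar>real_of_int k\<bar> * \<bar>real_of_int k\<bar>" by (intro mult_mono) auto
  then show ?thesis by (simp add: power2_eq_square)
qed

definition q3 :: "real \<Rightarrow> real" where "q3 r = - (1 / (2 * r))"
definition q3' :: "real \<Rightarrow> real" where "q3' r = 1 / (2 * r\<^sup>2)"
definition B3 where "B3 r = q3 r * h r - Re (w' r * cnj (w r))"
definition f3 where "f3 r = (cmod (w' r - of_real (q3 r) * w r))\<^sup>2"

lemma q3d: "r \<noteq> 0 \<Longrightarrow> (q3 has_real_derivative q3' r) (at r)"
  unfolding q3_def[abs_def] q3'_def
  by (auto intro!: derivative_eq_intros simp: field_simps power2_eq_square)

lemma f3li: "0 < a \<Longrightarrow> f3 integrable_on {a..b}"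
proof -
  assume a: "0 < a"
  have sub: "{a..b} \<subseteq> {0<..}" using a by auto
  show ?thesis unfolding f3_def q3_def
    using w'cont[OF a] wcont_on[OF sub] sub
    by (intro integrable_continuous_interval continuous_intros) auto
qed

lemma B3_near0:
  assumes e: "\<epsilon> > 0" and d: "\<delta> > 0"
  shows "\<exists>a. 0 < a \<and> a < \<delta> \<and> B3 a \<le> \<epsilon>"
proof (rule ccontr)
  assume neg: "\<not> ?thesis"
  have Bgt: "B3 x > \<epsilon>" if "0 < x" "x < \<delta>" for x using neg that by (meson not_le)
  define \<psi> where "\<psi> x = x * h x + \<epsilon> * x\<^sup>2" for x
  have dec: "\<psi> t \<ge> \<psi> s" if ts: "0 < t" "t \<le> s" "s < \<delta>" for t s
  proof (rule DERIV_nonpos_imp_nonincreasing[OF ts(2)])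
    fix x assume x: "t \<le> x" "x \<le> s"
    then have x0: "x > 0" "x < \<delta>" using ts by auto
    have "(\<psi> has_real_derivative (h x + x * hd x + \<epsilon> * (2 * x))) (at x)"
      unfolding \<psi>_def[abs_def]
      by (auto intro!: derivative_eq_intros hderiv[OF x0(1)] simp: power2_eq_square)
    moreover have "h x + x * hd x + \<epsilon> * (2 * x) \<le> 0"
    proof -
      have eq: "h x + x * hd x = - 2 * x * B3 x"
        unfolding B3_def q3_def hd_def using x0 by (simp add: field_simps)
      have "h x + x * hd x + \<epsilon> * (2 * x) = - 2 * (x * (B3 x - \<epsilon>))"
        using eq by (simp add: algebra_simps)
      moreover have "0 \<le> x * (B3 x - \<epsilon>)"
        using Bgt[OF x0] x0 by (intro mult_nonneg_nonneg) auto
      ultimately show ?thesis by linarith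
    qed
    ultimately show "\<exists>y. (\<psi> has_real_derivative y) (at x) \<and> y \<le> 0" by blast
  qed
  define s where "s = \<delta> / 2"
  define c where "c = 3 * \<epsilon> * \<delta>\<^sup>2 / 16"
  have c0: "c > 0" unfolding c_def using e d by simp
  obtain t where t: "0 < t" "t < \<delta> / 4" "t * h t < c"
    using exists_small_near0[OF hI _ c0, of "\<delta> / 4"] hnn d by auto
  have "\<psi> t \<ge> \<psi> s" using dec[of t s] t d unfolding s_def by auto
  then have "t * h t + \<epsilon> * t\<^sup>2 \<ge> s * h s + \<epsilon> * s\<^sup>2" unfolding \<psi>_def .
  moreover have "s * h s \<ge> 0" using hnn d unfolding s_def by simp
  moreover have "\<epsilon> * t\<^sup>2 \<le> \<epsilon> * (\<delta> / 4)\<^sup>2"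
    using t e by (intro mult_left_mono power_mono) auto
  ultimately have "t * h t \<ge> \<epsilon> * s\<^sup>2 - \<epsilon> * (\<delta> / 4)\<^sup>2" by linarith
  moreover have "\<epsilon> * s\<^sup>2 - \<epsilon> * (\<delta> / 4)\<^sup>2 = c"
    unfolding s_def c_def by (simp add: power2_eq_square field_simps)
  ultimately show False using t by linarith
qed

lemma B3_nearinf:
  assumes e: "\<epsilon> > 0"
  shows "\<exists>b. R < b \<and> - \<epsilon> \<le> B3 b"
proof (rule ccontr)
  assume neg: "\<not> ?thesis"
  define s where "s = max R 1 + 1"
  have s1: "s \<ge> 1" "s > R" unfolding s_def by auto
  have Blt: "B3 x < - \<epsilon>" if "s \<le> x" for x using neg that s1 by (meson not_le less_le_trans)
  define \<psi> where "\<psi> x = x * h x - \<epsilon> * x\<^sup>2" for x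
  have inc: "\<psi> s \<le> \<psi> x" if x: "s \<le> x" for x
  proof (rule DERIV_nonneg_imp_nondecreasing[OF x])
    fix y assume y: "s \<le> y" "y \<le> x"
    then have y0: "y > 0" using s1 by auto
    have "(\<psi> has_real_derivative (h y + y * hd y - \<epsilon> * (2 * y))) (at y)"
      unfolding \<psi>_def[abs_def]
      by (auto intro!: derivative_eq_intros hderiv[OF y0] simp: power2_eq_square)
    moreover have "h y + y * hd y - \<epsilon> * (2 * y) \<ge> 0"
    proof -
      have eq: "h y + y * hd y = - 2 * y * B3 y"
        unfolding B3_def q3_def hd_def using y0 by (simp add: field_simps)
      have "h y + y * hd y - \<epsilon> * (2 * y) = 2 * (y * (- B3 y - \<epsilon>))"
        using eq by (simp add: algebra_simps)
      moreover have "0 \<le> y * (- B3 y - \<epsilon>)"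
        using Blt[of y] y y0 by (intro mult_nonneg_nonneg) auto
      ultimately show ?thesis by linarith
    qed
    ultimately show "\<exists>z. (\<psi> has_real_derivative z) (at y) \<and> z \<ge> 0" by blast
  qed
  have c0: "3 * \<epsilon> / 4 > 0" using e by simp
  obtain b where b: "2 * s < b" "b * h b < 3 * \<epsilon> / 4"
    using exists_small_nearinf[OF hI _ c0, of "2 * s"] hnn by auto
  have b0: "b > 0" "s \<le> b" using b s1 by auto
  have "\<psi> s \<le> \<psi> b" using inc b0 by auto
  then have "s * h s - \<epsilon> * s\<^sup>2 \<le> b * h b - \<epsilon> * b\<^sup>2" unfolding \<psi>_def .
  moreover have "s * h s \<ge> 0" using hnn s1 by simp
  ultimately have "b * h b \<ge> \<epsilon> * b\<^sup>2 - \<epsilon> * s\<^sup>2" by linarith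
  moreover have "\<epsilon> * b\<^sup>2 - \<epsilon> * s\<^sup>2 \<ge> 3 * \<epsilon> / 4"
  proof -
    have "s\<^sup>2 \<le> (b / 2)\<^sup>2" using b s1 by (intro power_mono) auto
    then have "\<epsilon> * s\<^sup>2 \<le> \<epsilon> * (b\<^sup>2 / 4)" using e by (simp add: power_divide)
    moreover have "1 \<le> b\<^sup>2" using b0 s1 by (simp add: one_le_power)
    then have "\<epsilon> * 1 \<le> \<epsilon> * b\<^sup>2" using e by (intro mult_left_mono) auto
    ultimately show ?thesis by linarith
  qed
  ultimately show False using b by linarith
qed

lemma stepA: "f3 integrable_on {0<..}"
proof -
  have "f3 integrable_on {0<..} \<and> integral {0<..} f3 \<le> P + (1/2) * H"
  proof (rule combine[where B=B3])
    show "0 \<le> f3 x" for x unfolding f3_def by simp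
    show "f3 integrable_on {a..b}" if "0 < a" for a b using f3li that .
    show "0 \<le> (1/2::real)" by simp
    show "\<exists>a. 0 < a \<and> a < \<delta> \<and> B3 a \<le> \<epsilon>" if "\<epsilon> > 0" "\<delta> > 0" for \<epsilon> \<delta> using B3_near0 that .
    show "\<exists>b. R < b \<and> - \<epsilon> \<le> B3 b" if "\<epsilon> > 0" for \<epsilon> R using B3_nearinf that .
    fix a b :: real assume a: "0 < a" and ab: "a \<le> b"
    have sub: "{a..b} \<subseteq> {0<..}" using a by auto
    have id: "Re (integral {a..b} (\<lambda>r. G r * cnj (w r))) =
       integral {a..b} f3 + integral {a..b} (\<lambda>r. (Vk k r - q3' r - (q3 r)\<^sup>2) * h r) + B3 b - B3 a"
      unfolding f3_def B3_def
    proof (rule ident[OF a ab])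
      show "(q3 has_real_derivative q3' x) (at x)" if "x \<in> {a..b}" for x
        using that a by (intro q3d) auto
      show "continuous_on {a..b} q3'" unfolding q3'_def[abs_def]
        using sub by (intro continuous_intros) auto
    qed
    have "integral {a..b} (\<lambda>r. - (1/2) * h r) \<le> integral {a..b} (\<lambda>r. (Vk k r - q3' r - (q3 r)\<^sup>2) * h r)"
    proof (rule integral_le)
      show "(\<lambda>r. - (1/2) * h r) integrable_on {a..b}"
        using hli[OF a] by (intro Henstock_Kurzweil_Integration.integrable_on_mult_right)
      show "(\<lambda>r. (Vk k r - q3' r - (q3 r)\<^sup>2) * h r) integrable_on {a..b}"
        unfolding q3'_def q3_def using Vk_cont[OF sub] hcont_on[OF sub] sub
        by (intro integrable_continuous_interval continuous_intros) auto
      fix x assume x: "x \<in> {a..b}"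
      then have x0: "x > 0" using a by auto
      have "Vk k x - q3' x - (q3 x)\<^sup>2 = ((real_of_int k)\<^sup>2 - 1) / x\<^sup>2 + x\<^sup>2 / 16 - 1/2"
        unfolding Vk_def q3'_def q3_def using x0 by (simp add: field_simps power2_eq_square)
      moreover have "((real_of_int k)\<^sup>2 - 1) / x\<^sup>2 \<ge> 0" using ksq by simp
      moreover have "x\<^sup>2 / 16 \<ge> 0" by simp
      ultimately have "Vk k x - q3' x - (q3 x)\<^sup>2 \<ge> - 1/2" by linarith
      then show "- (1/2) * h x \<le> (Vk k x - q3' x - (q3 x)\<^sup>2) * h x"
        using hnn[of x] by (intro mult_right_mono) auto
    qed
    moreover have "integral {a..b} (\<lambda>r. - (1/2) * h r) = - (1/2) * integral {a..b} h"
      by simp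
    ultimately show "integral {a..b} f3 \<le> Re (integral {a..b} (\<lambda>r. G r * cnj (w r))) + 1/2 * integral {a..b} h + B3 a - B3 b"
      using id by linarith
  qed
  then show ?thesis by simp
qed

end


context wset
begin

definition u where "u r = of_real (sqrt r) * w r"
definition v where "v r = w' r - of_real (q3 r) * w r"

lemma uderiv:
  assumes r: "0 < r"
  shows "(u has_vector_derivative (of_real (sqrt r) * v r)) (at r)"
proof -
  have s: "((\<lambda>x. of_real (sqrt x) :: complex) has_vector_derivative of_real (inverse (sqrt r) / 2)) (at r)"
    by (rule has_vector_derivative_of_real[OF DERIV_real_sqrt[OF r]])
  have p: "(u has_vector_derivative (of_real (sqrt r) * w' r + of_real (inverse (sqrt r) / 2) * w r)) (at r)"
    unfolding u_def[abs_def] by (rule has_vector_derivative_mult[OF s deriv[OF r]])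
  have ss: "sqrt r * sqrt r = r" using r by simp
  have sp: "sqrt r > 0" using r by simp
  have "inverse (sqrt r) / 2 = sqrt r * (- q3 r)"
    unfolding q3_def using r sp ss by (simp add: field_simps)
  then have "of_real (sqrt r) * w' r + of_real (inverse (sqrt r) / 2) * w r = of_real (sqrt r) * v r"
    unfolding v_def by (simp add: algebra_simps)
  then show ?thesis using p by simp
qed

lemma ucont: assumes "S \<subseteq> {0<..}" shows "continuous_on S u"
  unfolding u_def[abs_def] using wcont_on[OF assms]
  by (intro continuous_intros) (auto intro: continuous_on_subset[OF continuous_on_real_sqrt])

lemma vcont: assumes "S \<subseteq> {0<..}" shows "continuous_on S v"
  unfolding v_def[abs_def] q3_def using wcont_on[OF assms] w'cont_on[OF assms] assms
  by (intro continuous_intros) auto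

lemma unorm: assumes "0 < t" shows "(cmod (u t))\<^sup>2 = t * h t"
  unfolding u_def h_def using assms by (simp add: norm_mult power_mult_distrib)

lemma f3_v: "f3 r = (cmod (v r))\<^sup>2" unfolding f3_def v_def ..

lemma f3abs: "f3 absolutely_integrable_on {0<..}"
  using stepA by (intro nonnegative_absolutely_integrable_1) (auto simp: f3_def)

lemma f3_small:
  assumes e: "\<eta> > 0"
  shows "\<exists>\<delta>>0. \<forall>t a. 0 < t \<and> t \<le> a \<and> a < \<delta> \<longrightarrow> integral {t..a} f3 < \<eta>"
proof -
  have e2: "\<eta> / 2 > 0" using e by simp
  obtain \<delta> R where d: "\<delta> > 0" and HH: "\<And>a b. 0 < a \<and> a < \<delta> \<and> R < b \<Longrightarrow>
      norm (integral {a..b} f3 - integral {0<..} f3) < \<eta> / 2"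
    using tail_conv[OF f3abs e2] by blast
  show ?thesis
  proof (rule exI[of _ \<delta>], intro conjI d allI impI)
    fix t a assume ta: "0 < t \<and> t \<le> a \<and> a < \<delta>"
    define y where "y = max R a + 1"
    have y: "R < y" "a \<le> y" unfolding y_def by auto
    have i: "f3 integrable_on {t..y}" using f3li ta by auto
    have c: "integral {t..a} f3 + integral {a..y} f3 = integral {t..y} f3"
      using Henstock_Kurzweil_Integration.integral_combine[OF _ y(2) i] ta by auto
    have "norm (integral {t..y} f3 - integral {0<..} f3) < \<eta> / 2" using HH ta y by auto
    moreover have "norm (integral {a..y} f3 - integral {0<..} f3) < \<eta> / 2" using HH ta y by auto
    ultimately show "integral {t..a} f3 < \<eta>" using c unfolding real_norm_def abs_less_iff by linarith
  qed
qed

lemma ulip: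
  assumes th: "\<theta> > 0"
  shows "\<exists>a0>0. \<forall>t a. 0 < t \<and> t \<le> a \<and> a < a0 \<longrightarrow> cmod (u a - u t) \<le> \<theta> * a"
proof -
  have th2: "\<theta>\<^sup>2 > 0" using th by simp
  obtain \<delta> where d: "\<delta> > 0" and sm: "\<And>t a. 0 < t \<and> t \<le> a \<and> a < \<delta> \<Longrightarrow> integral {t..a} f3 < \<theta>\<^sup>2"
    using f3_small[OF th2] by blast
  show ?thesis
  proof (rule exI[of _ \<delta>], intro conjI d allI impI)
    fix t a assume ta: "0 < t \<and> t \<le> a \<and> a < \<delta>"
    then have t0: "0 < t" and ta': "t \<le> a" and a0: "0 < a" by auto
    have sub: "{t..a} \<subseteq> {0<..}" using t0 by auto
    define c where "c = a / \<theta>"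
    have c0: "c > 0" unfolding c_def using a0 th by simp
    have ftc: "((\<lambda>r. of_real (sqrt r) * v r) has_integral (u a - u t)) {t..a}"
    proof (rule fundamental_theorem_of_calculus[OF ta'])
      fix x assume "x \<in> {t..a}"
      then have "x > 0" using t0 by auto
      then show "(u has_vector_derivative of_real (sqrt x) * v x) (at x within {t..a})"
        using uderiv has_vector_derivative_at_within by blast
    qed
    have pw: "cmod (of_real (sqrt r) * v r) \<le> (c * f3 r + a / c) / 2" if r: "r \<in> {t..a}" for r
    proof -
      have r0: "r > 0" "r \<le> a" using r t0 by auto
      have sq: "sqrt r * sqrt r = r" using r0 by simp
      have "0 \<le> (c * cmod (v r) - sqrt r)\<^sup>2" by simp
      then have "2 * c * (sqrt r * cmod (v r)) \<le> c * (c * (cmod (v r))\<^sup>2) + r"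
        using sq by (simp add: power2_eq_square algebra_simps)
      also have "\<dots> \<le> c * (c * (cmod (v r))\<^sup>2) + a" using r0 by simp
      finally have X: "2 * c * (sqrt r * cmod (v r)) \<le> c * (c * (cmod (v r))\<^sup>2) + a" .
      have Y: "c * (c * f3 r + a / c) = c * (c * (cmod (v r))\<^sup>2) + a"
        using c0 unfolding f3_v by (simp add: distrib_left)
      have "c * (2 * (sqrt r * cmod (v r))) \<le> c * (c * f3 r + a / c)"
        using X Y by (simp add: mult.assoc mult.left_commute)
      then have "2 * (sqrt r * cmod (v r)) \<le> c * f3 r + a / c"
        using c0 by (simp add: mult_le_cancel_left_pos)
      then have "sqrt r * cmod (v r) \<le> (c * f3 r + a / c) / 2" by simp
      then show ?thesis using r0 by (simp add: norm_mult)
    qed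
    have f3i: "f3 integrable_on {t..a}" using f3li t0 by auto
    have "cmod (u a - u t) = cmod (integral {t..a} (\<lambda>r. of_real (sqrt r) * v r))"
      using ftc by (simp add: integral_unique)
    also have "\<dots> \<le> integral {t..a} (\<lambda>r. (c * f3 r + a / c) / 2)"
      using ftc f3i pw
      by (intro integral_norm_bound_integral)
         (auto simp: has_integral_integrable intro!: Henstock_Kurzweil_Integration.integrable_on_divide integrable_add Henstock_Kurzweil_Integration.integrable_on_mult_right)
    also have "\<dots> = (c * integral {t..a} f3 + a / c * (a - t)) / 2"
    proof -
      have "integral {t..a} (\<lambda>r. c * f3 r + a / c) = integral {t..a} (\<lambda>r. c * f3 r) + integral {t..a} (\<lambda>r. a / c)"
        using f3i by (intro integral_add Henstock_Kurzweil_Integration.integrable_on_mult_right) auto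
      also have "\<dots> = c * integral {t..a} f3 + a / c * (a - t)" using ta' by simp
      finally show ?thesis by simp
    qed
    also have "\<dots> \<le> (c * \<theta>\<^sup>2 + a / c * a) / 2"
    proof -
      have "c * integral {t..a} f3 \<le> c * \<theta>\<^sup>2"
        using sm[OF ta] c0 by (intro mult_left_mono) auto
      moreover have "a / c * (a - t) \<le> a / c * a"
        using c0 a0 t0 by (intro mult_left_mono) auto
      ultimately show ?thesis by (intro divide_right_mono add_mono) auto
    qed
    also have "\<dots> = \<theta> * a"
      unfolding c_def using th a0 by (simp add: field_simps power2_eq_square)
    finally show "cmod (u a - u t) \<le> \<theta> * a" .
  qed
qed

lemma h_small:
  assumes th: "\<theta> > 0"
  shows "\<exists>a0>0. \<forall>a. 0 < a \<and> a < a0 \<longrightarrow> h a \<le> \<theta> * a"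
proof -
  define \<theta>1 where "\<theta>1 = sqrt \<theta> / 2"
  have t1: "\<theta>1 > 0" unfolding \<theta>1_def using th by simp
  have t1sq: "4 * \<theta>1\<^sup>2 = \<theta>" unfolding \<theta>1_def using th by (simp add: power_divide)
  obtain a0 where a0: "a0 > 0" and L: "\<And>t a. 0 < t \<and> t \<le> a \<and> a < a0 \<Longrightarrow> cmod (u a - u t) \<le> \<theta>1 * a"
    using ulip[OF t1] by blast
  show ?thesis
  proof (rule exI[of _ a0], intro conjI a0 allI impI)
    fix a assume a: "0 < a \<and> a < a0"
    have ua: "cmod (u a) \<le> 2 * \<theta>1 * a"
    proof (rule ccontr)
      assume neg: "\<not> ?thesis"
      define c0 where "c0 = \<theta>1 * a"
      have c0p: "c0 > 0" unfolding c0_def using t1 a by simp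
      have low: "c0 \<le> cmod (u t)" if "0 < t" "t \<le> a" for t
      proof -
        have "cmod (u a) \<le> cmod (u t) + cmod (u a - u t)"
          by (metis add.commute diff_add_cancel norm_triangle_ineq)
        then show ?thesis using L[of t a] that a neg unfolding c0_def by linarith
      qed
      have c02: "c0\<^sup>2 > 0" using c0p by simp
      obtain t where t: "0 < t" "t < a" "t * h t < c0\<^sup>2"
        using exists_small_near0[OF hI _ c02, of a] hnn a by auto
      have "c0\<^sup>2 \<le> (cmod (u t))\<^sup>2" using low[of t] t c0p by (intro power_mono) auto
      then show False using t unorm[of t] by linarith
    qed
    have "a * h a = (cmod (u a))\<^sup>2" using unorm[of a] a by simp
    also have "\<dots> \<le> (2 * \<theta>1 * a)\<^sup>2" using ua by (intro power_mono) auto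
    also have "\<dots> = a * (\<theta> * a)" using t1sq by (simp add: power2_eq_square algebra_simps)
    finally have "a * h a \<le> a * (\<theta> * a)" .
    then show "h a \<le> \<theta> * a" using a by simp
  qed
qed

end


context wset
begin

lemma hd_nearinf:
  assumes e: "\<epsilon> > 0"
  shows "\<exists>b. R < b \<and> hd b \<le> \<epsilon>"
proof (rule ccontr)
  assume neg: "\<not> ?thesis"
  define s where "s = max R 1 + 1"
  have s1: "s \<ge> 1" "s > R" unfolding s_def by auto
  have hgt: "hd x > \<epsilon>" if "s \<le> x" for x using neg that s1 by (meson not_le less_le_trans)
  have inc: "h s - \<epsilon> * s \<le> h x - \<epsilon> * x" if x: "s \<le> x" for x
  proof (rule DERIV_nonneg_imp_nondecreasing[OF x, of "\<lambda>x. h x - \<epsilon> * x"])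
    fix y assume y: "s \<le> y" "y \<le> x"
    then have y0: "y > 0" using s1 by auto
    have "((\<lambda>x. h x - \<epsilon> * x) has_real_derivative (hd y - \<epsilon>)) (at y)"
      by (auto intro!: derivative_eq_intros hderiv[OF y0])
    moreover have "hd y - \<epsilon> \<ge> 0" using hgt[of y] y by auto
    ultimately show "\<exists>z. ((\<lambda>x. h x - \<epsilon> * x) has_real_derivative z) (at y) \<and> z \<ge> 0" by blast
  qed
  have one: "(1::real) > 0" by simp
  obtain b where b: "s + 1 / \<epsilon> < b" "b * h b < 1"
    using exists_small_nearinf[OF hI _ one, of "s + 1 / \<epsilon>"] hnn by auto
  have bs: "s \<le> b" using b e by (smt (verit) divide_pos_pos)
  have "h b \<ge> \<epsilon> * (b - s)" using inc[OF bs] hnn[of s] by (simp add: algebra_simps)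
  moreover have "\<epsilon> * (b - s) > 1"
  proof -
    have "b - s > 1 / \<epsilon>" using b by simp
    then have "\<epsilon> * (b - s) > \<epsilon> * (1 / \<epsilon>)" using e by (intro mult_strict_left_mono) auto
    then show ?thesis using e by simp
  qed
  moreover have "b \<ge> 1" using bs s1 by simp
  ultimately have "b * h b \<ge> 1 * 1" by (intro mult_mono) auto
  then show False using b by simp
qed

lemma hd_near0:
  assumes e: "\<epsilon> > 0" and d: "\<delta> > 0"
  shows "\<exists>a. 0 < a \<and> a < \<delta> \<and> - \<epsilon> \<le> hd a"
proof (rule ccontr)
  assume neg: "\<not> ?thesis"
  have hlt: "hd x < - \<epsilon>" if "0 < x" "x < \<delta>" for x using neg that by (meson not_le)
  have dec: "h t + \<epsilon> * t \<ge> h s + \<epsilon> * s" if ts: "0 < t" "t \<le> s" "s < \<delta>" for t s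
  proof (rule DERIV_nonpos_imp_nonincreasing[OF ts(2), of "\<lambda>x. h x + \<epsilon> * x"])
    fix x assume x: "t \<le> x" "x \<le> s"
    then have x0: "x > 0" "x < \<delta>" using ts by auto
    have "((\<lambda>x. h x + \<epsilon> * x) has_real_derivative (hd x + \<epsilon>)) (at x)"
      by (auto intro!: derivative_eq_intros hderiv[OF x0(1)])
    moreover have "hd x + \<epsilon> \<le> 0" using hlt[OF x0] by auto
    ultimately show "\<exists>y. ((\<lambda>x. h x + \<epsilon> * x) has_real_derivative y) (at x) \<and> y \<le> 0" by blast
  qed
  have one: "(1::real) > 0" by simp
  obtain a0 where a0: "a0 > 0" and hs: "\<And>a. 0 < a \<and> a < a0 \<Longrightarrow> h a \<le> 1 * a"
    using h_small[OF one] by blast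
  define t where "t = min (\<delta> / 4) (min (a0 / 2) (\<epsilon> * \<delta> / 8))"
  have t0: "0 < t" unfolding t_def using d a0 e by simp
  have t1: "t \<le> \<delta> / 4" "t < a0" "t \<le> \<epsilon> * \<delta> / 8" unfolding t_def using a0 by auto
  have "h t + \<epsilon> * t \<ge> h (\<delta> / 2) + \<epsilon> * (\<delta> / 2)" using dec[of t "\<delta> / 2"] t0 t1 d by auto
  then have "h t \<ge> \<epsilon> * (\<delta> / 2) - \<epsilon> * t" using hnn[of "\<delta> / 2"] by linarith
  moreover have "\<epsilon> * t \<le> \<epsilon> * (\<delta> / 4)" using t1 e by (intro mult_left_mono) auto
  ultimately have "h t \<ge> \<epsilon> * \<delta> / 4" by (simp add: algebra_simps)
  moreover have "h t \<le> t" using hs[of t] t0 t1 by simp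
  moreover have "\<epsilon> * \<delta> / 8 < \<epsilon> * \<delta> / 4" using e d by simp
  ultimately show False using t1 by linarith
qed


lemma Vk_ge: assumes "0 < r" shows "Vk k r \<ge> - 1/2"
proof -
  have "(real_of_int k)\<^sup>2 - 1/4 \<ge> 0" using ksq by simp
  then have "((real_of_int k)\<^sup>2 - 1/4) / r\<^sup>2 \<ge> 0" by simp
  moreover have "r\<^sup>2 / 16 \<ge> 0" by simp
  ultimately show ?thesis unfolding Vk_def by linarith
qed

lemma stepB:
  "(\<lambda>r. (cmod (w' r))\<^sup>2) integrable_on {0<..} \<and> integral {0<..} (\<lambda>r. (cmod (w' r))\<^sup>2) \<le> P + 1/2 * H"
proof (rule combine[where B="\<lambda>r. - Re (w' r * cnj (w r))"])
  show "0 \<le> (cmod (w' x))\<^sup>2" for x by simp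
  show "(\<lambda>r. (cmod (w' r))\<^sup>2) integrable_on {a..b}" if "0 < a" for a b
    using w'cont[OF that] by (intro integrable_continuous_interval continuous_intros)
  show "0 \<le> (1/2::real)" by simp
  show "\<exists>a. 0 < a \<and> a < \<delta> \<and> - Re (w' a * cnj (w a)) \<le> \<epsilon>" if e: "\<epsilon> > 0" and d: "\<delta> > 0" for \<epsilon> \<delta>
  proof -
    have e2: "2 * \<epsilon> > 0" using e by simp
    obtain a where "0 < a" "a < \<delta>" "- (2 * \<epsilon>) \<le> hd a" using hd_near0[OF e2 d] by auto
    then show ?thesis unfolding hd_def by (intro exI[of _ a]) auto
  qed
  show "\<exists>b. R < b \<and> - \<epsilon> \<le> - Re (w' b * cnj (w b))" if e: "\<epsilon> > 0" for \<epsilon> R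
  proof -
    have e2: "2 * \<epsilon> > 0" using e by simp
    obtain b where "R < b" "hd b \<le> 2 * \<epsilon>" using hd_nearinf[OF e2, of R] by auto
    then show ?thesis unfolding hd_def by (intro exI[of _ b]) auto
  qed
  fix a b :: real assume a: "0 < a" and ab: "a \<le> b"
  have sub: "{a..b} \<subseteq> {0<..}" using a by auto
  have id: "Re (integral {a..b} (\<lambda>r. G r * cnj (w r))) =
     integral {a..b} (\<lambda>r. (cmod (w' r - of_real 0 * w r))\<^sup>2) + integral {a..b} (\<lambda>r. (Vk k r - 0 - 0\<^sup>2) * h r)
     + (0 * h b - Re (w' b * cnj (w b))) - (0 * h a - Re (w' a * cnj (w a)))"
    by (rule ident[OF a ab, of "\<lambda>_. 0" "\<lambda>_. 0"]) auto
  have "integral {a..b} (\<lambda>r. - (1/2) * h r) \<le> integral {a..b} (\<lambda>r. (Vk k r - 0 - 0\<^sup>2) * h r)"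
  proof (rule integral_le)
    show "(\<lambda>r. - (1/2) * h r) integrable_on {a..b}"
      using hli[OF a] by (intro Henstock_Kurzweil_Integration.integrable_on_mult_right)
    show "(\<lambda>r. (Vk k r - 0 - 0\<^sup>2) * h r) integrable_on {a..b}"
      using Vk_cont[OF sub] hcont_on[OF sub]
      by (intro integrable_continuous_interval continuous_intros) auto
    fix x assume x: "x \<in> {a..b}"
    then have x0: "x > 0" using a by auto
    show "- (1/2) * h x \<le> (Vk k x - 0 - 0\<^sup>2) * h x"
      using hnn[of x] Vk_ge[OF x0] by (intro mult_right_mono) auto
  qed
  moreover have "integral {a..b} (\<lambda>r. - (1/2) * h r) = - (1/2) * integral {a..b} h" by simp
  ultimately show "integral {a..b} (\<lambda>r. (cmod (w' r))\<^sup>2) \<le> Re (integral {a..b} (\<lambda>r. G r * cnj (w r)))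
      + 1/2 * integral {a..b} h + - Re (w' a * cnj (w a)) - - Re (w' b * cnj (w b))"
    using id by simp
qed

definition K where "K = \<bar>real_of_int k\<bar>"
definition alpha where "alpha = K + 1/2"
definition qg :: "real \<Rightarrow> real" where "qg r = alpha / r - r / 4"
definition qg' :: "real \<Rightarrow> real" where "qg' r = - alpha / r\<^sup>2 - 1/4"
definition Bg where "Bg r = qg r * h r - Re (w' r * cnj (w r))"

lemma K1: "K \<ge> 1" unfolding K_def using k1 by linarith

lemma alpha_pos: "alpha > 0" unfolding alpha_def using K1 by simp

lemma qgd: "r \<noteq> 0 \<Longrightarrow> (qg has_real_derivative qg' r) (at r)"
  unfolding qg_def[abs_def] qg'_def
  by (auto intro!: derivative_eq_intros simp: field_simps power2_eq_square)

lemma Vqg: assumes r: "0 < r" shows "Vk k r - qg' r - (qg r)\<^sup>2 = K / 2"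
proof -
  have kk: "(real_of_int k)\<^sup>2 = K * K" unfolding K_def by (simp add: power2_eq_square)
  show ?thesis
    unfolding Vk_def qg'_def qg_def alpha_def kk using r
    by (simp add: field_simps power2_eq_square)
qed

lemma Bg_near0:
  assumes e: "\<epsilon> > 0" and d: "\<delta> > 0"
  shows "\<exists>a. 0 < a \<and> a < \<delta> \<and> Bg a \<le> \<epsilon>"
proof -
  define \<theta> where "\<theta> = \<epsilon> / (2 * alpha)"
  have th: "\<theta> > 0" unfolding \<theta>_def using e alpha_pos by simp
  obtain a0 where a0: "a0 > 0" and hs: "\<And>a. 0 < a \<and> a < a0 \<Longrightarrow> h a \<le> \<theta> * a"
    using h_small[OF th] by blast
  obtain a where a: "0 < a" "a < min \<delta> a0" "- \<epsilon> \<le> hd a"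
    using hd_near0[OF e, of "min \<delta> a0"] d a0 by auto
  have "qg a * h a \<le> (alpha / a) * h a"
    unfolding qg_def using a hnn[of a] by (intro mult_right_mono) auto
  also have "\<dots> \<le> (alpha / a) * (\<theta> * a)"
    using hs[of a] a alpha_pos by (intro mult_left_mono) auto
  also have "\<dots> = \<epsilon> / 2" unfolding \<theta>_def using a alpha_pos by (simp add: field_simps)
  finally have "qg a * h a \<le> \<epsilon> / 2" .
  moreover have "- Re (w' a * cnj (w a)) \<le> \<epsilon> / 2" using a(3) unfolding hd_def by simp
  ultimately show ?thesis using a unfolding Bg_def by (intro exI[of _ a]) auto
qed

lemma Bg_nearinf:
  assumes e: "\<epsilon> > 0"
  shows "\<exists>b. R < b \<and> - \<epsilon> \<le> Bg b"
proof -
  define f where "f r = (cmod (w' r))\<^sup>2 + h r" for r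
  have fi: "f integrable_on {0<..}" unfolding f_def[abs_def] using stepB hI by (intro integrable_add) auto
  have fnn: "0 \<le> f x" for x unfolding f_def using hnn[of x] by simp
  obtain b where b: "max R 1 < b" "b * f b < \<epsilon>"
    using exists_small_nearinf[OF fi _ e, of "max R 1"] fnn by auto
  have b1: "b \<ge> 1" "b > 0" using b by auto
  have r1: "Re (w' b * cnj (w b)) \<le> f b / 2"
  proof -
    have "Re (w' b * cnj (w b)) \<le> cmod (w' b * cnj (w b))" by (rule complex_Re_le_cmod)
    also have "\<dots> = cmod (w' b) * cmod (w b)" by (simp add: norm_mult)
    also have "\<dots> \<le> ((cmod (w' b))\<^sup>2 + (cmod (w b))\<^sup>2) / 2"
      using sum_squares_bound[of "cmod (w' b)" "cmod (w b)"] by (simp add: power2_eq_square)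
    finally show ?thesis unfolding f_def h_def .
  qed
  have r2: "qg b * h b \<ge> - (b / 4) * h b"
  proof -
    have "qg b \<ge> - (b / 4)" unfolding qg_def using alpha_pos b1 by simp
    then show ?thesis using hnn[of b] by (intro mult_right_mono) auto
  qed
  have "(b / 4) * h b \<le> (b / 4) * f b" unfolding f_def using b1 by (intro mult_left_mono) auto
  moreover have "f b / 2 \<le> (b / 2) * f b"
  proof -
    have "1 * f b \<le> b * f b" using b1 fnn[of b] by (intro mult_right_mono) auto
    then show ?thesis by simp
  qed
  ultimately have "Bg b \<ge> - (3 / 4) * (b * f b)" unfolding Bg_def using r1 r2 by (simp add: algebra_simps)
  moreover have "0 \<le> b * f b" using b1 fnn[of b] by simp
  then have "- (3 / 4) * (b * f b) \<ge> - \<epsilon>" using b by linarith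
  ultimately show ?thesis using b by (intro exI[of _ b]) auto
qed

lemma stepC: "K / 2 * H \<le> P"
proof -
  have "(\<lambda>r. K / 2 * h r) integrable_on {0<..} \<and> integral {0<..} (\<lambda>r. K / 2 * h r) \<le> P + 0 * H"
  proof (rule combine[where B=Bg])
    show "0 \<le> K / 2 * h x" for x using K1 hnn[of x] by simp
    show "(\<lambda>r. K / 2 * h r) integrable_on {a..b}" if "0 < a" for a b
      using hli[OF that] by (intro Henstock_Kurzweil_Integration.integrable_on_mult_right)
    show "0 \<le> (0::real)" by simp
    show "\<exists>a. 0 < a \<and> a < \<delta> \<and> Bg a \<le> \<epsilon>" if "\<epsilon> > 0" "\<delta> > 0" for \<epsilon> \<delta> using Bg_near0 that .
    show "\<exists>b. R < b \<and> - \<epsilon> \<le> Bg b" if "\<epsilon> > 0" for \<epsilon> R using Bg_nearinf that .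
    fix a b :: real assume a: "0 < a" and ab: "a \<le> b"
    have sub: "{a..b} \<subseteq> {0<..}" using a by auto
    have id: "Re (integral {a..b} (\<lambda>r. G r * cnj (w r))) =
       integral {a..b} (\<lambda>r. (cmod (w' r - of_real (qg r) * w r))\<^sup>2)
       + integral {a..b} (\<lambda>r. (Vk k r - qg' r - (qg r)\<^sup>2) * h r) + Bg b - Bg a"
      unfolding Bg_def
    proof (rule ident[OF a ab])
      show "(qg has_real_derivative qg' x) (at x)" if "x \<in> {a..b}" for x
        using that a by (intro qgd) auto
      show "continuous_on {a..b} qg'" unfolding qg'_def[abs_def]
        using sub by (intro continuous_intros) auto
    qed
    have e1: "integral {a..b} (\<lambda>r. (Vk k r - qg' r - (qg r)\<^sup>2) * h r) = integral {a..b} (\<lambda>r. K / 2 * h r)"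
      by (rule integral_cong) (use Vqg a in auto)
    have e2: "0 \<le> integral {a..b} (\<lambda>r. (cmod (w' r - of_real (qg r) * w r))\<^sup>2)"
    proof (rule integral_nonneg)
      show "(\<lambda>r. (cmod (w' r - of_real (qg r) * w r))\<^sup>2) integrable_on {a..b}"
        unfolding qg_def using w'cont[OF a] wcont_on[OF sub] sub
        by (intro integrable_continuous_interval continuous_intros) auto
    qed auto
    show "integral {a..b} (\<lambda>r. K / 2 * h r) \<le> Re (integral {a..b} (\<lambda>r. G r * cnj (w r))) + 0 * integral {a..b} h + Bg a - Bg b"
      using id e1 e2 by simp
  qed
  then have "integral {0<..} (\<lambda>r. K / 2 * h r) \<le> P" by simp
  moreover have "integral {0<..} (\<lambda>r. K / 2 * h r) = K / 2 * H" unfolding H_def by (rule integral_mult_right)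
  ultimately show ?thesis by linarith
qed

end


lemma Re_integral:
  fixes f :: "real \<Rightarrow> complex"
  assumes "f integrable_on S"
  shows "Re (integral S f) = integral S (\<lambda>x. Re (f x))"
  using has_integral_linear[OF integrable_integral[OF assms] bounded_linear_Re]
  by (simp add: o_def integral_unique)

context wset
begin

lemma w_lim0: "(w \<longlongrightarrow> 0) (at_right 0)"
proof -
  have one: "(1::real) > 0" by simp
  obtain a0 where a0: "a0 > 0" and hs: "\<And>a. 0 < a \<and> a < a0 \<Longrightarrow> h a \<le> 1 * a"
    using h_small[OF one] by blast
  have ev: "\<forall>\<^sub>F r in at_right 0. norm (w r) \<le> sqrt r"
    unfolding eventually_at_right_field
  proof (intro exI[of _ a0] conjI a0 allI impI)
    fix r :: real assume r: "0 < r" "r < a0"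
    have "(norm (w r))\<^sup>2 \<le> r" using hs[of r] r unfolding h_def by simp
    then show "norm (w r) \<le> sqrt r" using real_le_rsqrt by blast
  qed
  have "((\<lambda>r. sqrt r) \<longlongrightarrow> sqrt 0) (at_right 0)"
    by (intro tendsto_intros tendsto_ident_at)
  then have "((\<lambda>r. sqrt r) \<longlongrightarrow> 0) (at_right 0)" by simp
  then show ?thesis using Lim_null_comparison[OF ev] by (simp add: tendsto_norm_zero_iff)
qed

lemma w'_borel: "w' \<in> borel_measurable (lebesgue_on {0<..})"
  by (rule continuous_imp_measurable_on_sets_lebesgue[OF w'cont_on]) auto

lemma w'_L2: "L2_on {0<..} w'"
  unfolding L2_on_def using stepB w'_borel
  by (simp add: measurable_on_iff_borel_measurable[OF lebesgue_Ioi])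

lemma w'_int0:
  assumes b: "0 < b"
  shows "w' integrable_on {0..b} \<and> integral {0..b} w' = w b"
proof -
  define S where "S = {0<..b}"
  have S: "S \<in> sets lebesgue" unfolding S_def by simp
  have Ssub: "S \<subseteq> {0<..}" unfolding S_def by auto
  have sq: "(\<lambda>r. (cmod (w' r))\<^sup>2) integrable_on S"
  proof -
    have "(\<lambda>x. if x \<in> {..b} then (cmod (w' x))\<^sup>2 else 0) integrable_on {0<..}"
    proof (rule measurable_bounded_by_integrable_imp_integrable)
      show "(\<lambda>x. if x \<in> {..b} then (cmod (w' x))\<^sup>2 else 0) \<in> borel_measurable (lebesgue_on {0<..})"
      proof -
        have [measurable]: "(\<lambda>x::real. x) \<in> borel_measurable (lebesgue_on {0<..})"
          by (rule continuous_imp_measurable_on_sets_lebesgue) (auto intro: continuous_intros)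
        show ?thesis using w'_borel by measurable
      qed
      show "(\<lambda>r. (cmod (w' r))\<^sup>2) integrable_on {0<..}" using stepB by simp
    qed auto
    then have "(\<lambda>r. (cmod (w' r))\<^sup>2) integrable_on ({..b} \<inter> {0<..})"
      by (simp only: integrable_restrict_Int)
    moreover have "{..b} \<inter> {0<..} = S" unfolding S_def by auto
    ultimately show ?thesis by simp
  qed
  have one: "(\<lambda>r. 1::real) integrable_on S"
  proof -
    have "(\<lambda>r. 1::real) integrable_on {0..b}" by (rule integrable_const_ivl)
    then show ?thesis unfolding S_def
      by (rule integrable_spike_set) (auto intro: negligible_subset[of "{0}"])
  qed
  have absS: "w' absolutely_integrable_on S"
  proof (rule measurable_bounded_by_integrable_imp_absolutely_integrable[OF _ S])
    show "w' \<in> borel_measurable (lebesgue_on S)"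
      by (rule continuous_imp_measurable_on_sets_lebesgue[OF w'cont_on[OF Ssub] S])
    show "(\<lambda>r. (1 + (cmod (w' r))\<^sup>2) / 2) integrable_on S"
      using one sq by (intro Henstock_Kurzweil_Integration.integrable_on_divide integrable_add)
    show "cmod (w' x) \<le> (1 + (cmod (w' x))\<^sup>2) / 2" for x
      using sum_squares_bound[of 1 "cmod (w' x)"] by (simp add: power2_eq_square)
  qed
  have iS: "w' integrable_on S" using absS by (simp add: absolutely_integrable_on_def)
  have i0: "w' integrable_on {0..b}"
    using iS unfolding S_def by (rule integrable_spike_set) (auto intro: negligible_subset[of "{0}"])
  have ftc: "integral {t..b} w' = w b - w t" if t: "0 < t" "t \<le> b" for t
  proof -
    have "(w' has_integral (w b - w t)) {t..b}"
    proof (rule fundamental_theorem_of_calculus[OF t(2)])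
      fix x assume "x \<in> {t..b}"
      then have "x > 0" using t by auto
      then show "(w has_vector_derivative w' x) (at x within {t..b})"
        using deriv has_vector_derivative_at_within by blast
    qed
    then show ?thesis by (simp add: integral_unique)
  qed
  have c: "continuous_on {0..b} (\<lambda>x. integral {x..b} w')"
    by (rule indefinite_integral_continuous_1'[OF i0])
  then have l1: "((\<lambda>x. integral {x..b} w') \<longlongrightarrow> integral {0..b} w') (at 0 within {0..b})"
    using b by (auto simp: continuous_on_def)
  have atw: "at 0 within {0..b} = at_right (0::real)"
    using b by (rule at_within_Icc_at_right)
  have l2: "((\<lambda>x. integral {x..b} w') \<longlongrightarrow> w b - 0) (at_right 0)"
  proof -
    have lim: "((\<lambda>x. w b - w x) \<longlongrightarrow> w b - 0) (at_right 0)"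
      by (intro tendsto_intros w_lim0)
    have ev: "\<forall>\<^sub>F x in at_right 0. w b - w x = integral {x..b} w'"
      unfolding eventually_at_right_field
      using b ftc by (intro exI[of _ b]) auto
    show ?thesis using tendsto_cong[OF ev] lim by simp
  qed
  have "integral {0..b} w' = w b"
    using tendsto_unique[OF _ l1[unfolded atw] l2] by simp
  then show ?thesis using i0 by simp
qed

end


lemma final_A:
  fixes H D P NF K :: real
  assumes H: "H \<ge> 0" and D: "D \<ge> 0" and K: "K \<ge> 1" and NF: "NF \<ge> 0"
    and hD: "D \<le> P + 1/2 * H" and hK: "K / 2 * H \<le> P" and hP: "P \<le> NF * sqrt H"
  shows "sqrt K * sqrt (H + D) + K * sqrt H \<le> 7 * NF"
proof -
  define x where "x = sqrt H"
  have x0: "x \<ge> 0" unfolding x_def using H by simp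
  have xx: "x * x = H" unfolding x_def using H by simp
  have Kx: "K * x \<le> 2 * NF"
  proof (cases "x = 0")
    case True then show ?thesis using NF by simp
  next
    case False
    then have xp: "x > 0" using x0 by simp
    have "x * (K * x) \<le> x * (2 * NF)"
      using hK hP xx unfolding x_def[symmetric] by (simp add: algebra_simps)
    then show ?thesis using xp by (simp add: mult_le_cancel_left_pos)
  qed
  have "1 * x \<le> K * x" using K x0 by (intro mult_right_mono) auto
  then have x2: "x \<le> 2 * NF" using Kx by simp
  have a1: "K * H \<le> 4 * NF\<^sup>2"
  proof -
    have "K * H = x * (K * x)" using xx by (simp add: algebra_simps)
    also have "\<dots> \<le> x * (2 * NF)" using Kx x0 by (intro mult_left_mono) auto
    also have "\<dots> \<le> (2 * NF) * (2 * NF)" using x2 NF by (intro mult_right_mono) auto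
    finally show ?thesis by (simp add: power2_eq_square)
  qed
  have a2: "K * D \<le> 4 * NF\<^sup>2"
  proof -
    have "K * D \<le> K * (NF * x + 1/2 * H)"
      using hD hP K unfolding x_def[symmetric] by (intro mult_left_mono) auto
    also have "\<dots> = NF * (K * x) + 1/2 * (K * H)" by (simp add: algebra_simps)
    also have "\<dots> \<le> NF * (2 * NF) + 1/2 * (4 * NF\<^sup>2)"
      using Kx a1 NF by (intro add_mono mult_left_mono) auto
    also have "\<dots> = 4 * NF\<^sup>2" by (simp add: power2_eq_square)
    finally show ?thesis .
  qed
  have "sqrt K * sqrt (H + D) = sqrt (K * (H + D))" by (simp add: real_sqrt_mult)
  also have "\<dots> \<le> sqrt ((3 * NF)\<^sup>2)"
  proof (rule real_sqrt_le_mono)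
    have n2: "0 \<le> NF\<^sup>2" by simp
    have e9: "(3 * NF)\<^sup>2 = 9 * NF\<^sup>2" by (simp add: power_mult_distrib)
    have "K * (H + D) = K * H + K * D" by (simp add: algebra_simps)
    then show "K * (H + D) \<le> (3 * NF)\<^sup>2" using a1 a2 n2 e9 by linarith
  qed
  also have "\<dots> = 3 * NF" using NF by (subst real_sqrt_abs) simp
  finally have b1: "sqrt K * sqrt (H + D) \<le> 3 * NF" .
  have b2: "K * sqrt H \<le> 2 * NF" using Kx unfolding x_def .
  show ?thesis using b1 b2 NF by linarith
qed

lemma final_B:
  fixes H D P N K :: real
  assumes H: "H \<ge> 0" and D: "D \<ge> 0" and K: "K \<ge> 1" and N: "N \<ge> 0"
    and hD: "D \<le> P + 1/2 * H" and hK: "K / 2 * H \<le> P" and hP: "P \<le> N * sqrt (H + D)"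
  shows "sqrt (H + D) + sqrt K * sqrt H \<le> 7 * N"
proof -
  define y where "y = sqrt (H + D)"
  have y0: "y \<ge> 0" unfolding y_def using H D by simp
  have yy: "y * y = H + D" unfolding y_def using H D by simp
  have KH: "K * H \<le> 2 * P" using hK by simp
  have "1 * H \<le> K * H" using H K by (intro mult_right_mono) auto
  then have HKH: "H \<le> K * H" by simp
  have "y * y \<le> 4 * P" using yy hD KH HKH by linarith
  also have "\<dots> \<le> y * (4 * N)" using hP unfolding y_def[symmetric] by (simp add: algebra_simps)
  finally have yyN: "y * y \<le> y * (4 * N)" .
  have y4: "y \<le> 4 * N"
  proof (cases "y = 0")
    case True then show ?thesis using N by simp
  next
    case False then have "y > 0" using y0 by simp
    then show ?thesis using yyN by (simp add: mult_le_cancel_left_pos)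
  qed
  have "K * H \<le> 2 * (N * y)" using KH hP unfolding y_def[symmetric] by linarith
  also have "\<dots> \<le> 2 * (N * (4 * N))" using y4 N by (intro mult_left_mono) auto
  also have "\<dots> \<le> (3 * N)\<^sup>2" by (simp add: power2_eq_square)
  finally have "K * H \<le> (3 * N)\<^sup>2" .
  then have "sqrt (K * H) \<le> sqrt ((3 * N)\<^sup>2)" by (rule real_sqrt_le_mono)
  moreover have "sqrt ((3 * N)\<^sup>2) = 3 * N" using N by (subst real_sqrt_abs) simp
  ultimately have "sqrt K * sqrt H \<le> 3 * N" by (simp add: real_sqrt_mult)
  then show ?thesis using y4 unfolding y_def by linarith
qed


lemma int_nonneg_any:
  fixes g :: "real \<Rightarrow> real"
  assumes "\<And>x. 0 \<le> g x"
  shows "0 \<le> integral S g"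
proof (cases "g integrable_on S")
  case True then show ?thesis using assms by (intro integral_nonneg) auto
next
  case False then show ?thesis by (simp add: not_integrable_integral)
qed

lemma L2norm_nonneg: "0 \<le> L2norm f"
  unfolding L2norm_def by (intro real_sqrt_ge_zero int_nonneg_any) simp

lemma L2norm_le_H1: "L2norm f \<le> H1norm f f'"
  unfolding H1norm_def
proof -
  have "L2norm f = sqrt ((L2norm f)\<^sup>2)" using L2norm_nonneg[of f] by simp
  also have "\<dots> \<le> sqrt ((L2norm f)\<^sup>2 + (L2norm f')\<^sup>2)" by (intro real_sqrt_le_mono) simp
  finally show "L2norm f \<le> sqrt ((L2norm f)\<^sup>2 + (L2norm f')\<^sup>2)" .
qed

lemma pair_bound:
  fixes F \<psi> :: "real \<Rightarrow> complex"
  assumes FL2: "L2_on {0<..} F" and pL2: "L2_on {0<..} \<psi>"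
  shows "cmod (integral {0<..} (\<lambda>r. F r * cnj (\<psi> r))) \<le> L2norm F * L2norm \<psi>"
proof -
  have "cmod (integral {0<..} (\<lambda>r. F r * cnj (\<psi> r))) \<le> integral {0<..} (\<lambda>r. norm (F r) * norm (\<psi> r))"
    using L2_prod(1,2)[OF FL2 pL2 lebesgue_Ioi]
    by (intro integral_norm_bound_integral) (auto simp: absolutely_integrable_on_def norm_mult)
  also have "\<dots> \<le> L2norm F * L2norm \<psi>"
    unfolding L2norm_def using L2_prod(3)[OF FL2 pL2 lebesgue_Ioi] .
  finally show ?thesis .
qed

lemma Hm1_lower:
  fixes F \<phi> \<phi>' :: "real \<Rightarrow> complex"
  assumes FL2: "L2_on {0<..} F" and Hp: "H10 \<phi> \<phi>'" and n: "H1norm \<phi> \<phi>' \<le> 1"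
  shows "cmod (integral {0<..} (\<lambda>r. F r * cnj (\<phi> r))) \<le> Hm1norm F"
  unfolding Hm1norm_def
proof (rule cSup_upper)
  show "cmod (integral {0<..} (\<lambda>r. F r * cnj (\<phi> r))) \<in> {cmod (integral {0<..} (\<lambda>r. F r * cnj (\<phi> r))) | \<phi> \<phi>'.
                     H10 \<phi> \<phi>' \<and> H1norm \<phi> \<phi>' \<le> 1}"
    using Hp n by blast
  show "bdd_above {cmod (integral {0<..} (\<lambda>r. F r * cnj (\<phi> r))) | \<phi> \<phi>'.
                     H10 \<phi> \<phi>' \<and> H1norm \<phi> \<phi>' \<le> 1}"
  proof (rule bdd_aboveI)
    fix x assume "x \<in> {cmod (integral {0<..} (\<lambda>r. F r * cnj (\<phi> r))) | \<phi> \<phi>'.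
                     H10 \<phi> \<phi>' \<and> H1norm \<phi> \<phi>' \<le> 1}"
    then obtain \<psi> \<psi>' where x: "x = cmod (integral {0<..} (\<lambda>r. F r * cnj (\<psi> r)))"
      and H: "H10 \<psi> \<psi>'" and n1: "H1norm \<psi> \<psi>' \<le> 1" by blast
    have pL2: "L2_on {0<..} \<psi>" using H unfolding H10_def by auto
    have "x \<le> L2norm F * L2norm \<psi>" unfolding x by (rule pair_bound[OF FL2 pL2])
    also have "\<dots> \<le> L2norm F * 1"
      using L2norm_le_H1[of \<psi> \<psi>'] n1 L2norm_nonneg[of F] by (intro mult_left_mono) auto
    finally show "x \<le> L2norm F" by simp
  qed
qed

lemma L2_on_zero: "L2_on S (\<lambda>r. 0)"
  unfolding L2_on_def by (simp add: integrable_0)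

lemma Hm1_nonneg:
  assumes FL2: "L2_on {0<..} F"
  shows "0 \<le> Hm1norm F"
proof -
  have H: "H10 (\<lambda>r. 0) (\<lambda>r. 0)" unfolding H10_def using L2_on_zero by auto
  have n: "H1norm (\<lambda>r. 0) (\<lambda>r. 0) \<le> 1" unfolding H1norm_def L2norm_def by simp
  show ?thesis using Hm1_lower[OF FL2 H n] by simp
qed


lemma L2_diff:
  fixes f g :: "real \<Rightarrow> complex"
  assumes f: "L2_on S f" and g: "L2_on S g" and S: "S \<in> sets lebesgue"
  shows "L2_on S (\<lambda>r. f r - c * g r)"
proof -
  have [measurable]: "f \<in> borel_measurable (lebesgue_on S)" "g \<in> borel_measurable (lebesgue_on S)"
    using L2_borel f g S by auto
  have m: "(\<lambda>r. f r - c * g r) \<in> borel_measurable (lebesgue_on S)" by measurable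
  have f2: "(\<lambda>x. (norm (f x))\<^sup>2) integrable_on S" and g2: "(\<lambda>x. (norm (g x))\<^sup>2) integrable_on S"
    using f g by (auto simp: L2_on_def)
  have dom: "(\<lambda>x. 2 * (norm (f x))\<^sup>2 + 2 * (cmod c)\<^sup>2 * (norm (g x))\<^sup>2) integrable_on S"
    using f2 g2 by (intro integrable_add Henstock_Kurzweil_Integration.integrable_on_mult_right)
  have pb: "(cmod (f x - c * g x))\<^sup>2 \<le> 2 * (norm (f x))\<^sup>2 + 2 * (cmod c)\<^sup>2 * (norm (g x))\<^sup>2" for x
  proof -
    have "cmod (f x - c * g x) \<le> cmod (f x) + cmod c * cmod (g x)"
      using norm_triangle_ineq4[of "f x" "c * g x"] by (simp add: norm_mult)
    then have "(cmod (f x - c * g x))\<^sup>2 \<le> (cmod (f x) + cmod c * cmod (g x))\<^sup>2"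
      by (intro power_mono) auto
    also have "\<dots> \<le> 2 * (norm (f x))\<^sup>2 + 2 * (cmod c)\<^sup>2 * (norm (g x))\<^sup>2"
      using sum_squares_bound[of "cmod (f x)" "cmod c * cmod (g x)"]
      by (simp add: power2_eq_square algebra_simps)
    finally show ?thesis .
  qed
  have "(\<lambda>r. (cmod (f r - c * g r))\<^sup>2) integrable_on S"
  proof (rule measurable_bounded_by_integrable_imp_integrable[OF _ dom _ S])
    show "(\<lambda>r. (cmod (f r - c * g r))\<^sup>2) \<in> borel_measurable (lebesgue_on S)" using m by measurable
    show "norm ((cmod (f x - c * g x))\<^sup>2) \<le> 2 * (norm (f x))\<^sup>2 + 2 * (cmod c)\<^sup>2 * (norm (g x))\<^sup>2" for x
      using pb[of x] by simp
  qed
  then show ?thesis unfolding L2_on_def using m S by (simp add: measurable_on_iff_borel_measurable)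
qed

lemma main:
  fixes k :: int and \<beta> lam :: real and w w' w'' :: "real \<Rightarrow> complex"
  assumes k: "\<bar>k\<bar> \<ge> 1" and Dk: "Dk k \<beta> w w' w''"
  shows "sqrt \<bar>real_of_int k\<bar> * H1norm w w' + \<bar>real_of_int k\<bar> * L2norm w \<le> 7 * L2norm (Fk k \<beta> lam w w'')
       \<and> H1norm w w' + sqrt \<bar>real_of_int k\<bar> * L2norm w \<le> 7 * Hm1norm (Fk k \<beta> lam w w'')"
proof -
  interpret wset k \<beta> w w' w''
  proof
    show "1 \<le> \<bar>k\<bar>" using k .
    show "(w has_vector_derivative w' r) (at r)" if "r > 0" for r
      using Dk that unfolding Dk_def H2loc_def by auto
    show "L2_on {a..b} w''" if "0 < a" "a \<le> b" for a b
      using Dk that unfolding Dk_def H2loc_def by auto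
    show "w'' integrable_on {a..b}" if "0 < a" "a \<le> b" for a b
      using Dk that unfolding Dk_def H2loc_def by auto
    show "w' b - w' a = integral {a..b} w''" if "0 < a" "a \<le> b" for a b
      using Dk that unfolding Dk_def H2loc_def by auto
    show "L2_on {0<..} w" using Dk unfolding Dk_def by auto
    show "L2_on {0<..} (\<lambda>r. - w'' r + of_real (Vk k r) * w r + \<i> * of_real \<beta> * w r / of_real (r\<^sup>2))"
      using Dk unfolding Dk_def by auto
  qed
  define F where "F = Fk k \<beta> lam w w''"
  define D' where "D' = integral {0<..} (\<lambda>r. (cmod (w' r))\<^sup>2)"
  have H0: "H \<ge> 0" unfolding H_def using hI hnn by (intro integral_nonneg) auto
  have D0: "D' \<ge> 0" unfolding D'_def using stepB by (intro integral_nonneg) auto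
  have Lw: "L2norm w = sqrt H" unfolding L2norm_def H_def h_def ..
  have Lw': "L2norm w' = sqrt D'" unfolding L2norm_def D'_def ..
  have H1e: "H1norm w w' = sqrt (H + D')" unfolding H1norm_def Lw Lw' using H0 D0 by simp
  have sB: "D' \<le> P + 1/2 * H" using stepB unfolding D'_def by simp
  have sC: "\<bar>real_of_int k\<bar> / 2 * H \<le> P" using stepC unfolding K_def .
  have Kk: "\<bar>real_of_int k\<bar> \<ge> 1" using K1 unfolding K_def .
  have Feq: "F = (\<lambda>r. G r - (\<i> * of_real (\<beta> * lam)) * w r)"
  proof
    fix r
    have "of_real (1 / r\<^sup>2 - lam) = (inverse (of_real (r\<^sup>2)) - of_real lam :: complex)"
      by (simp add: divide_inverse)
    then show "F r = G r - (\<i> * of_real (\<beta> * lam)) * w r"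
      unfolding F_def Fk_def G_def by (simp add: divide_inverse algebra_simps)
  qed
  have FL2: "L2_on {0<..} F"
    unfolding Feq using L2_diff[OF GL2' wL2 lebesgue_Ioi] .
  have Fwi: "(\<lambda>r. F r * cnj (w r)) integrable_on {0<..}"
    using L2_prod(1)[OF FL2 wL2 lebesgue_Ioi] by (simp add: absolutely_integrable_on_def)
  have Gwi: "(\<lambda>r. G r * cnj (w r)) integrable_on {0<..}"
    using GwAbs by (simp add: absolutely_integrable_on_def)
  have PF: "P = Re (integral {0<..} (\<lambda>r. F r * cnj (w r)))"
  proof -
    have pt: "Re (F r * cnj (w r)) = Re (G r * cnj (w r))" for r
    proof -
      have ww: "w r * cnj (w r) = of_real (h r)" unfolding h_def by (rule complex_norm_square[symmetric])
      have "F r * cnj (w r) = G r * cnj (w r) - \<i> * of_real (\<beta> * lam) * (w r * cnj (w r))"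
        unfolding Feq by (simp add: algebra_simps)
      also have "\<dots> = G r * cnj (w r) - \<i> * of_real (\<beta> * lam * h r)" unfolding ww by simp
      finally show ?thesis by simp
    qed
    show ?thesis unfolding P_def Re_integral[OF Fwi] Re_integral[OF Gwi] pt ..
  qed
  have PcF: "P \<le> cmod (integral {0<..} (\<lambda>r. F r * cnj (w r)))"
    unfolding PF by (rule complex_Re_le_cmod)
  have PleA: "P \<le> L2norm F * sqrt H"
    using PcF pair_bound[OF FL2 wL2] unfolding Lw by linarith
  have A: "sqrt \<bar>real_of_int k\<bar> * H1norm w w' + \<bar>real_of_int k\<bar> * L2norm w \<le> 7 * L2norm F"
    unfolding H1e Lw by (rule final_A[OF H0 D0 Kk L2norm_nonneg sB sC PleA])
  define N where "N = Hm1norm F"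
  have N0: "N \<ge> 0" unfolding N_def by (rule Hm1_nonneg[OF FL2])
  have PleB: "P \<le> N * sqrt (H + D')"
  proof (cases "H + D' = 0")
    case True
    then have "H = 0" using H0 D0 by simp
    then show ?thesis using PleA True by simp
  next
    case False
    define c where "c = sqrt (H + D')"
    have c0: "c > 0" unfolding c_def using False H0 D0 by simp
    have cc: "c * c = H + D'" unfolding c_def using H0 D0 by simp
    define \<phi> where "\<phi> r = (if 0 < r then w r / of_real c else 0)" for r
    define \<phi>' where "\<phi>' r = w' r / of_real c" for r
    have [measurable]: "(\<lambda>x::real. x) \<in> borel_measurable (lebesgue_on {0<..})"
      by (rule continuous_imp_measurable_on_sets_lebesgue) (auto intro: continuous_intros)
    have [measurable]: "w \<in> borel_measurable (lebesgue_on {0<..})" using L2_borel[OF wL2 lebesgue_Ioi] .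
    have [measurable]: "w' \<in> borel_measurable (lebesgue_on {0<..})" using w'_borel .
    have pm: "\<phi> \<in> borel_measurable (lebesgue_on {0<..})" unfolding \<phi>_def[abs_def] by measurable
    have pm': "\<phi>' \<in> borel_measurable (lebesgue_on {0<..})" unfolding \<phi>'_def[abs_def] by measurable
    have n1: "(cmod (\<phi> r))\<^sup>2 = h r / c\<^sup>2" if "r \<in> {0<..}" for r
      using that unfolding \<phi>_def h_def by (simp add: norm_divide power_divide)
    have n2: "(cmod (\<phi>' r))\<^sup>2 = (cmod (w' r))\<^sup>2 / c\<^sup>2" for r
      unfolding \<phi>'_def by (simp add: norm_divide power_divide)
    have i1: "(\<lambda>r. (cmod (\<phi> r))\<^sup>2) integrable_on {0<..}"
    proof -
      have e: "(\<lambda>r. h r / c\<^sup>2) integrable_on {0<..}"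
        using hI by (rule Henstock_Kurzweil_Integration.integrable_on_divide)
      have "(\<lambda>r. (cmod (\<phi> r))\<^sup>2) integrable_on {0<..} \<longleftrightarrow> (\<lambda>r. h r / c\<^sup>2) integrable_on {0<..}"
        by (rule integrable_cong) (rule n1)
      then show ?thesis using e by simp
    qed
    have i2: "(\<lambda>r. (cmod (\<phi>' r))\<^sup>2) integrable_on {0<..}"
      unfolding n2 using stepB by (simp add: Henstock_Kurzweil_Integration.integrable_on_divide)
    have I1: "integral {0<..} (\<lambda>r. (cmod (\<phi> r))\<^sup>2) = H / c\<^sup>2"
    proof -
      have "integral {0<..} (\<lambda>r. (cmod (\<phi> r))\<^sup>2) = integral {0<..} (\<lambda>r. h r / c\<^sup>2)"
        by (rule integral_cong) (rule n1)
      then show ?thesis unfolding H_def by (simp add: integral_divide)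
    qed
    have I2: "integral {0<..} (\<lambda>r. (cmod (\<phi>' r))\<^sup>2) = D' / c\<^sup>2"
      unfolding n2 D'_def by (simp add: integral_divide)
    have Hphi: "H10 \<phi> \<phi>'"
      unfolding H10_def
    proof (intro conjI allI impI)
      show "L2_on {0<..} \<phi>" unfolding L2_on_def using pm i1
        by (simp add: measurable_on_iff_borel_measurable[OF lebesgue_Ioi])
      show "L2_on {0<..} \<phi>'" unfolding L2_on_def using pm' i2
        by (simp add: measurable_on_iff_borel_measurable[OF lebesgue_Ioi])
      show "\<phi> 0 = 0" unfolding \<phi>_def by simp
      fix a b :: real assume ab: "0 \<le> a \<and> a \<le> b"
      have "w' integrable_on {a..b} \<and> (if 0 < b then w b else 0) - (if 0 < a then w a else 0) = integral {a..b} w'"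
      proof (cases "a = 0")
        case True
        show ?thesis
        proof (cases "b = 0")
          case True
          then show ?thesis using \<open>a = 0\<close> by (simp add: integrable_negligible)
        next
          case False
          then have b0: "b > 0" using ab by simp
          then show ?thesis using w'_int0[OF b0] True by simp
        qed
      next
        case False
        then have a0: "a > 0" using ab by simp
        have "(w' has_integral (w b - w a)) {a..b}"
        proof (rule fundamental_theorem_of_calculus)
          show "a \<le> b" using ab by simp
          fix x assume "x \<in> {a..b}"
          then have "x > 0" using a0 by auto
          then show "(w has_vector_derivative w' x) (at x within {a..b})"
            using deriv has_vector_derivative_at_within by blast
        qed
        then show ?thesis using a0 ab by (auto simp: integral_unique has_integral_integrable)
      qed
      then have X: "w' integrable_on {a..b}" "(if 0 < b then w b else 0) - (if 0 < a then w a else 0) = integral {a..b} w'"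
        by auto
      show "\<phi>' integrable_on {a..b}" unfolding \<phi>'_def[abs_def] using X(1)
        by (rule Henstock_Kurzweil_Integration.integrable_on_divide)
      show "\<phi> b - \<phi> a = integral {a..b} \<phi>'"
      proof -
        have "integral {a..b} \<phi>' = integral {a..b} w' / of_real c"
          unfolding \<phi>'_def[abs_def] by (rule integral_divide)
        also have "\<dots> = ((if 0 < b then w b else 0) - (if 0 < a then w a else 0)) / of_real c" using X(2) by simp
        also have "\<dots> = \<phi> b - \<phi> a"
          unfolding \<phi>_def by (auto simp: diff_divide_distrib)
        finally show ?thesis by simp
      qed
    qed
    have nphi: "H1norm \<phi> \<phi>' \<le> 1"
    proof -
      have "H1norm \<phi> \<phi>' = sqrt (H / c\<^sup>2 + D' / c\<^sup>2)"
        unfolding H1norm_def L2norm_def I1 I2 using H0 D0 c0 by simp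
      also have "\<dots> = sqrt ((H + D') / c\<^sup>2)" by (simp add: add_divide_distrib)
      also have "\<dots> = 1" using cc c0 False by (simp add: power2_eq_square)
      finally show ?thesis by simp
    qed
    have low: "cmod (integral {0<..} (\<lambda>r. F r * cnj (\<phi> r))) \<le> N"
      unfolding N_def by (rule Hm1_lower[OF FL2 Hphi nphi])
    have "integral {0<..} (\<lambda>r. F r * cnj (\<phi> r)) = integral {0<..} (\<lambda>r. F r * cnj (w r) / of_real c)"
      by (rule integral_cong) (simp add: \<phi>_def)
    also have "\<dots> = integral {0<..} (\<lambda>r. F r * cnj (w r)) / of_real c" by (rule integral_divide)
    finally have "cmod (integral {0<..} (\<lambda>r. F r * cnj (\<phi> r))) = cmod (integral {0<..} (\<lambda>r. F r * cnj (w r))) / c"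
      using c0 by (simp add: norm_divide)
    then have "cmod (integral {0<..} (\<lambda>r. F r * cnj (w r))) \<le> N * c"
      using low c0 by (simp add: divide_le_eq mult.commute)
    then show ?thesis using PcF unfolding c_def by linarith
  qed
  have B: "H1norm w w' + sqrt \<bar>real_of_int k\<bar> * L2norm w \<le> 7 * N"
    unfolding H1e Lw by (rule final_B[OF H0 D0 Kk N0 sB sC PleB])
  show ?thesis using A B unfolding F_def N_def by simp
qed

theorem lemma2p2:
  shows "\<exists>C>0. \<forall>(k::int) (\<beta>::real) (lam::real) w w' w''.
           \<bar>k\<bar> \<ge> 1 \<and> Dk k \<beta> w w' w'' \<longrightarrow>
             sqrt \<bar>real_of_int k\<bar> * H1norm w w' + \<bar>real_of_int k\<bar> * L2norm w
               \<le> C * L2norm (Fk k \<beta> lam w w'') \<and>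
             H1norm w w' + sqrt \<bar>real_of_int k\<bar> * L2norm w
               \<le> C * Hm1norm (Fk k \<beta> lam w w'')"
  by (rule exI[of _ 7]) (auto intro!: main)


end
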